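(* Let $p$ be an odd prime and let $f:\mathbb{F}_{p^{2k}}\to\mathbb{F}_p$ satisfy Condition A with sign $\epsilon$. Let $D_{\mathcal N}=\{x\in\mathbb{F}_{p^{2k}}^*: f(x)\text{ is a non-square in }\mathbb{F}_p\}$. Then $D_{\mathcal N}$ is a $(v,d,\lambda_1,\lambda_2)$ partial difference set in the additive group of $\mathbb{F}_{p^{2k}}$ with $v=p^{2k}$, $d=\frac12(p^k-p^{k-1})(p^k-\epsilon)$, $\lambda_1=\frac14(p^k-p^{k-1})^2-\frac{3\epsilon}{2}(p^k-p^{k-1})+\epsilon p^k$, $\lambda_2=\frac12(p^k-p^{k-1})\left(\frac12(p^k-p^{k-1})-\epsilon\right)$.
   Context: Let $\zeta_p$ be a primitive complex $p$-th root of unity and $\mathrm{tr}$ the absolute trace from $\mathbb{F}_{p^{2k}}$ to $\mathbb{F}_p$. For $f:\mathbb{F}_{p^{2k}}\to\mathbb{F}_p$ the Walsh transform is $\mathcal{W}_f(b)=\sum_{x\in\mathbb{F}_{p^{2k}}}\zeta_p^{f(x)+\mathrm{tr}(bx)}$. Condition A: $p$ is an odd prime and $f:\mathbb{F}_{p^{2k}}\to\mathbb{F}_p$ satisfies $f(0)=0$, $f(-x)=f(x)$ for all $x$; there is an integer $l$ with $\gcd(l-1,p-1)=1$ such that $f(\alpha x)=\alpha^l f(x)$ for all $\alpha\in\mathbb{F}_p$, $x\in\mathbb{F}_{p^{2k}}$; and there exist a constant $\epsilon\in\{1,-1\}$ and a function $f^*:\mathbb{F}_{p^{2k}}\to\mathbb{F}_p$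 such that $\mathcal{W}_f(b)=\epsilon p^k\zeta_p^{f^*(b)}$ for all $b\in\mathbb{F}_{p^{2k}}$. A $d$-subset $D$ of a finite abelian group $G$ (written additively, of order $v$) with $0\notin D$ is a $(v,d,\lambda,\mu)$ partial difference set if every nonzero element of $D$ can be written as $g-h$ with $g,h\in D$ in exactly $\lambda$ ways, and every nonzero element of $G\setminus D$ can be written so in exactly $\mu$ ways. *)

theory Defs
  imports Complex_Main "HOL-Computational_Algebra.Primes"
begin

text \<open>The finite field F_{p^{2k}} is modelled by a finite field type 'a with
  CARD('a) = p^(2k); F_p is its prime subfield {of_nat i | i < p}.\<close>

definition prime_subfield :: "nat \<Rightarrow> 'a::field set" where
  "prime_subfield p = {of_nat i | i. i < p}"

definition fp_index :: "nat \<Rightarrow> 'a::field \<Rightarrow> nat" where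
  "fp_index p y = (THE i. i < p \<and> of_nat i = y)"

definition abs_trace :: "nat \<Rightarrow> nat \<Rightarrow> 'a::field \<Rightarrow> 'a" where
  "abs_trace p k x = (\<Sum>i<2*k. x ^ (p ^ i))"

definition zeta_pow :: "nat \<Rightarrow> 'a::field \<Rightarrow> complex" where
  "zeta_pow p y = cis (2 * pi / real p) ^ fp_index p y"

definition walsh :: "nat \<Rightarrow> nat \<Rightarrow> ('a::{field,finite} \<Rightarrow> 'a) \<Rightarrow> 'a \<Rightarrow> complex" where
  "walsh p k f b = (\<Sum>x\<in>UNIV. zeta_pow p (f x + abs_trace p k (b * x)))"

definition conditionA :: "nat \<Rightarrow> nat \<Rightarrow> ('a::{field,finite} \<Rightarrow> 'a) \<Rightarrow> int \<Rightarrow> bool" where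
  "conditionA p k f \<epsilon> \<longleftrightarrow>
     prime p \<and> odd p \<and> card (UNIV::'a set) = p ^ (2*k) \<and>
     (\<forall>x. f x \<in> prime_subfield p) \<and>
     f 0 = 0 \<and> (\<forall>x. f (-x) = f x) \<and>
     (\<exists>l::int. gcd (l - 1) (int p - 1) = 1 \<and>
        (\<forall>\<alpha>\<in>prime_subfield p. \<forall>x. f (\<alpha> * x) = \<alpha> powi l * f x)) \<and>
     \<epsilon> \<in> {1, -1} \<and>
     (\<exists>fstar::'a \<Rightarrow> 'a. (\<forall>b. fstar b \<in> prime_subfield p) \<and>
        (\<forall>b. walsh p k f b = of_int \<epsilon> * of_nat (p ^ k) * zeta_pow p (fstar b)))"

definition is_nonsquare_Fp :: "nat \<Rightarrow> 'a::field \<Rightarrow> bool" where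
  "is_nonsquare_Fp p y \<longleftrightarrow> y \<in> prime_subfield p \<and> \<not> (\<exists>z\<in>prime_subfield p. z ^ 2 = y)"

definition partial_difference_set ::
  "'a::{ab_group_add,finite} set \<Rightarrow> real \<Rightarrow> real \<Rightarrow> real \<Rightarrow> real \<Rightarrow> bool" where
  "partial_difference_set D v d lam mu \<longleftrightarrow>
     0 \<notin> D \<and> real (card (UNIV::'a set)) = v \<and> real (card D) = d \<and>
     (\<forall>g\<in>D. g \<noteq> 0 \<longrightarrow> real (card {(x, y). x \<in> D \<and> y \<in> D \<and> x - y = g}) = lam) \<and>
     (\<forall>g. g \<notin> D \<and> g \<noteq> 0 \<longrightarrow> real (card {(x, y). x \<in> D \<and> y \<in> D \<and> x - y = g}) = mu)"

end

theory Submission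
  imports Defs "HOL-Computational_Algebra.Computational_Algebra" "HOL-Library.Real_Mod" "HOL-Number_Theory.Residues"
begin

lemma map_poly_of_int_mult:
  "map_poly (of_int::int\<Rightarrow>'b::comm_ring_1) (P*Q) = map_poly of_int P * map_poly of_int Q"
  by (rule poly_eqI) (simp add: coeff_map_poly coeff_mult)

lemma map_poly_of_int_add:
  "map_poly (of_int::int\<Rightarrow>'b::comm_ring_1) (P+Q) = map_poly of_int P + map_poly of_int Q"
  by (rule poly_eqI) (simp add: coeff_map_poly)

lemma map_poly_of_int_smult:
  "map_poly (of_int::int\<Rightarrow>'b::comm_ring_1) (Polynomial.smult c Q) = Polynomial.smult (of_int c) (map_poly of_int Q)"
  by (rule poly_eqI) (simp add: coeff_map_poly)

lemma eisenstein_core: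
  fixes A B :: "int poly" and p :: int
  assumes pr: "prime p" and AB: "A * B = \<Psi>" and dA: "degree A \<ge> 1" and dB: "degree B \<ge> 1"
    and low: "\<And>j. j < degree \<Psi> \<Longrightarrow> p dvd Polynomial.coeff \<Psi> j"
    and c0: "\<not> p^2 dvd Polynomial.coeff \<Psi> 0" and lc: "\<not> p dvd lead_coeff \<Psi>"
    and pA: "p dvd Polynomial.coeff A 0"
  shows False
proof -
  have nz: "A \<noteq> 0" "B \<noteq> 0" using dA dB by auto
  have degP: "degree \<Psi> = degree A + degree B" unfolding AB[symmetric] using nz by (simp add: degree_mult_eq)
  have "lead_coeff \<Psi> = lead_coeff A * lead_coeff B" unfolding AB[symmetric] by (simp add: lead_coeff_mult)
  hence nA: "\<not> p dvd lead_coeff A" using lc by auto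
  have c0AB: "Polynomial.coeff \<Psi> 0 = Polynomial.coeff A 0 * Polynomial.coeff B 0" unfolding AB[symmetric] by (simp add: coeff_mult)
  have nB0: "\<not> p dvd Polynomial.coeff B 0"
  proof
    assume "p dvd Polynomial.coeff B 0"
    with pA have "p * p dvd Polynomial.coeff A 0 * Polynomial.coeff B 0" by (rule mult_dvd_mono)
    with c0 c0AB show False by (simp add: power2_eq_square)
  qed
  define r where "r = (LEAST i. \<not> p dvd Polynomial.coeff A i)"
  have r1: "\<not> p dvd Polynomial.coeff A r" unfolding r_def by (rule LeastI[of _ "degree A"]) (use nA in auto)
  have r2: "\<And>i. i < r \<Longrightarrow> p dvd Polynomial.coeff A i" unfolding r_def using not_less_Least by blast
  have "r \<le> degree A" unfolding r_def by (rule Least_le) (use nA in auto)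
  hence rlt: "r < degree \<Psi>" using degP dB by linarith
  have "Polynomial.coeff \<Psi> r = (\<Sum>i\<le>r. Polynomial.coeff A i * Polynomial.coeff B (r-i))" unfolding AB[symmetric] by (simp add: coeff_mult)
  also have "\<dots> = (\<Sum>i<r. Polynomial.coeff A i * Polynomial.coeff B (r-i)) + Polynomial.coeff A r * Polynomial.coeff B 0"
    by (simp add: lessThan_Suc_atMost[symmetric])
  finally have eq: "Polynomial.coeff \<Psi> r = (\<Sum>i<r. Polynomial.coeff A i * Polynomial.coeff B (r-i)) + Polynomial.coeff A r * Polynomial.coeff B 0" .
  have "p dvd (\<Sum>i<r. Polynomial.coeff A i * Polynomial.coeff B (r-i))" by (rule dvd_sum) (simp add: r2)
  moreover have "p dvd Polynomial.coeff \<Psi> r" using low rlt by blast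
  ultimately have "p dvd Polynomial.coeff A r * Polynomial.coeff B 0" using eq by (metis dvd_add_right_iff)
  thus False using pr r1 nB0 by (simp add: prime_dvd_mult_iff)
qed

lemma pcompose_power: "pcompose (x ^ n) q = (pcompose x q) ^ n"
  by (induction n) (simp_all add: pcompose_1 pcompose_mult)

definition cyc :: "nat \<Rightarrow> int poly" where
  "cyc p = (\<Sum>i<p. [:0,1:] ^ i)"

definition cycs :: "nat \<Rightarrow> int poly" where
  "cycs p = pcompose (cyc p) [:1,1:]"

lemma cyc_monom: "cyc p = (\<Sum>i<p. Polynomial.monom 1 i)"
  by (simp add: cyc_def monom_altdef)

lemma cyc_eq: "[:-1,1:] * cyc p = [:0,1:] ^ p - 1"
proof -
  have "[:0,1:] ^ p - 1 = ([:0,1:] - 1) * (\<Sum>i<p. [:0,1::int:] ^ i)" by (rule power_diff_1_eq)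
  moreover have "[:0,1:] - 1 = [:-1,1::int:]" by (simp add: one_pCons)
  ultimately show ?thesis by (simp add: cyc_def)
qed

lemma cycs_eq: "[:0,1:] * cycs p = [:1,1:] ^ p - 1"
proof -
  have "pcompose ([:-1,1:] * cyc p) [:1,1:] = pcompose ([:0,1:] ^ p - 1) [:1,1::int:]"
    by (simp only: cyc_eq)
  thus ?thesis
    by (simp add: pcompose_mult pcompose_diff pcompose_power pcompose_1 pcompose_pCons cycs_def one_pCons)
qed

lemma coeff_cycs: assumes "j < p" shows "Polynomial.coeff (cycs p) j = int (p choose (j+1))"
proof -
  have "Polynomial.coeff (cycs p) j = Polynomial.coeff ([:0,1:] * cycs p) (Suc j)" by (simp add: coeff_pCons)
  also have "\<dots> = Polynomial.coeff ([:1,1:] ^ p - 1) (Suc j)" by (simp only: cycs_eq)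
  also have "\<dots> = Polynomial.coeff ([:1,1::int:] ^ p) (Suc j)" by simp
  also have "\<dots> = int (p choose Suc j)" using assms by (subst coeff_linear_poly_power) auto
  finally show ?thesis by simp
qed

lemma degree_cyc: assumes "p \<ge> 1" shows "degree (cyc p) = p - 1"
proof -
  have "[:0,1::int:] ^ p = Polynomial.monom 1 p" by (simp add: monom_altdef)
  hence "[:0,1::int:] ^ p - 1 = Polynomial.monom 1 p + (-1)" by simp
  moreover have "degree (Polynomial.monom (1::int) p + (-1)) = p"
    using assms by (subst degree_add_eq_left) (auto simp: degree_monom_eq)
  ultimately have "degree ([:-1,1:] * cyc p) = p" unfolding cyc_eq by simp
  moreover have "cyc p \<noteq> 0" using \<open>degree ([:-1,1:] * cyc p) = p\<close> assms by auto
  ultimately show ?thesis by (subst (asm) degree_mult_eq) auto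
qed

lemma degree_cycs: assumes "p \<ge> 1" shows "degree (cycs p) = p - 1"
  using assms by (simp add: cycs_def degree_pcompose degree_cyc)

lemma cyc_irreducible:
  assumes pr: "prime p"
  shows "irreducible (cyc p)"
proof -
  have p2: "p \<ge> 2" using pr prime_ge_2_nat by blast
  have dc: "degree (cyc p) = p - 1" using degree_cyc p2 by auto
  have dcs: "degree (cycs p) = p - 1" using degree_cycs p2 by auto
  have lcs: "lead_coeff (cycs p) = 1" using dcs coeff_cycs[of "p-1" p] p2 by simp
  have lc: "lead_coeff (cyc p) = 1"
  proof -
    have "lead_coeff (cycs p) = lead_coeff (cyc p) * lead_coeff [:1,1::int:] ^ degree (cyc p)"
      unfolding cycs_def by (rule lead_coeff_comp) simp
    thus ?thesis using lcs by simp
  qed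
  have prp: "prime (int p)" using pr by simp
  have low: "\<And>j. j < degree (cycs p) \<Longrightarrow> int p dvd Polynomial.coeff (cycs p) j"
  proof -
    fix j assume "j < degree (cycs p)"
    hence j: "j + 1 < p" using dcs by auto
    have "p dvd (p choose (j+1))" by (rule dvd_choose_prime) (use j pr in auto)
    thus "int p dvd Polynomial.coeff (cycs p) j" using coeff_cycs[of j p] j by simp
  qed
  have c0: "\<not> (int p)^2 dvd Polynomial.coeff (cycs p) 0"
  proof
    assume "(int p)^2 dvd Polynomial.coeff (cycs p) 0"
    hence "int p * int p dvd int p * 1" using coeff_cycs[of 0 p] p2 by (simp add: power2_eq_square)
    hence "int p dvd 1" using p2 by (subst (asm) dvd_times_left_cancel_iff) auto
    thus False using prp by (simp add: prime_int_iff)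
  qed
  have lcn: "\<not> int p dvd lead_coeff (cycs p)" using lcs prp by (auto simp: prime_int_iff)
  show ?thesis
  proof (rule irreducibleI)
    show "cyc p \<noteq> 0" using lc by auto
    show "\<not> is_unit (cyc p)" using dc p2 by (auto simp: is_unit_poly_iff)
    fix a b assume ab: "cyc p = a * b"
    show "is_unit a \<or> is_unit b"
    proof (cases "degree a = 0 \<or> degree b = 0")
      case True
      have "lead_coeff a * lead_coeff b = 1" using lc ab by (simp add: lead_coeff_mult)
      hence "lead_coeff a dvd 1" "lead_coeff b dvd 1" by (metis dvdI mult.commute)+
      thus ?thesis using True
        by (metis degree_0_id is_unit_poly_iff)
    next
      case False
      define A where "A = pcompose a [:1,1:]"
      define B where "B = pcompose b [:1,1:]"
      have AB: "A * B = cycs p" unfolding A_def B_def cycs_def ab by (simp add: pcompose_mult)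
      have dA: "degree A \<ge> 1" "degree B \<ge> 1" using False by (auto simp: A_def B_def degree_pcompose)
      have "Polynomial.coeff A 0 * Polynomial.coeff B 0 = Polynomial.coeff (cycs p) 0" unfolding AB[symmetric] by (simp add: coeff_mult)
      hence "int p dvd Polynomial.coeff A 0 * Polynomial.coeff B 0" using coeff_cycs[of 0 p] p2 by simp
      hence "int p dvd Polynomial.coeff A 0 \<or> int p dvd Polynomial.coeff B 0" using prp by (simp add: prime_dvd_mult_iff)
      thus ?thesis
      proof
        assume "int p dvd Polynomial.coeff A 0"
        from eisenstein_core[OF prp AB dA low c0 lcn this] show ?thesis ..
      next
        assume hB: "int p dvd Polynomial.coeff B 0"
        have BA: "B * A = cycs p" using AB by (simp add: mult.commute)
        from eisenstein_core[OF prp BA dA(2) dA(1) low c0 lcn hB] show ?thesis ..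
      qed
    qed
  qed
qed

lemma cyc_min_degree:
  fixes w :: complex
  assumes pr: "prime p" and root: "poly (map_poly of_int (cyc p)) w = 0"
    and P: "P \<noteq> 0" "poly (map_poly of_int P) w = 0"
  shows "degree P \<ge> p - 1"
proof -
  define E where "E = (\<lambda>Q::int poly. poly (map_poly (of_int::int\<Rightarrow>complex) Q) w)"
  have Emult: "E (Q1 * Q2) = E Q1 * E Q2" for Q1 Q2 by (simp add: E_def map_poly_of_int_mult)
  have Eadd: "E (Q1 + Q2) = E Q1 + E Q2" for Q1 Q2 by (simp add: E_def map_poly_of_int_add)
  have Esmult: "E (Polynomial.smult c Q) = of_int c * E Q" for c Q by (simp add: E_def map_poly_of_int_smult)
  define S where "S = {d. \<exists>Q. Q \<noteq> 0 \<and> E Q = 0 \<and> degree Q = d}"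
  have "degree P \<in> S" using P by (auto simp: S_def E_def)
  define m where "m = (LEAST d. d \<in> S)"
  have "m \<in> S" unfolding m_def by (rule LeastI) fact
  then obtain Q where Q: "Q \<noteq> 0" "E Q = 0" "degree Q = m" by (auto simp: S_def)
  have mmin: "\<And>R. R \<noteq> 0 \<Longrightarrow> E R = 0 \<Longrightarrow> m \<le> degree R"
    unfolding m_def by (rule Least_le) (auto simp: S_def)
  have mP: "m \<le> degree P" using mmin P by (simp add: E_def)
  obtain A R where qr: "pseudo_divmod (cyc p) Q = (A, R)" by force
  define c where "c = Polynomial.coeff Q (degree Q) ^ (Suc (degree (cyc p)) - degree Q)"
  have "lead_coeff Q \<noteq> 0" using Q(1) by simp
  hence c0: "c \<noteq> 0" by (simp add: c_def)
  have eq: "Polynomial.smult c (cyc p) = Q * A + R" using pseudo_divmod(1)[OF Q(1) qr] by (simp add: c_def)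
  have degR: "R = 0 \<or> degree R < degree Q" using pseudo_divmod(2)[OF Q(1) qr] .
  have Ec: "E (cyc p) = 0" using root by (simp add: E_def)
  have "E R = 0"
  proof -
    have "E (Polynomial.smult c (cyc p)) = E (Q * A) + E R" by (simp add: eq Eadd)
    thus ?thesis using Ec Q(2) by (simp add: Esmult Emult)
  qed
  hence R0: "R = 0" using degR mmin Q(3) by fastforce
  have prc: "prime_elem (cyc p)" using cyc_irreducible[OF pr] by (rule irreducible_imp_prime_elem)
  have "cyc p dvd Q * A"
    using eq R0 by (metis add.right_neutral dvd_smult dvd_refl)
  hence "cyc p dvd Q \<or> cyc p dvd A" using prc by (simp add: prime_elem_dvd_mult_iff)
  thus ?thesis
  proof
    assume "cyc p dvd Q"
    hence "degree (cyc p) \<le> degree Q" using Q(1) by (rule dvd_imp_degree_le)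
    thus ?thesis using degree_cyc[of p] pr prime_ge_1_nat Q(3) mP by fastforce
  next
    assume "cyc p dvd A"
    then obtain B where B: "A = cyc p * B" by (auto elim: dvdE)
    have cnz: "cyc p \<noteq> 0" using prc by auto
    have "Polynomial.smult c (cyc p) = (Q * B) * cyc p" using eq R0 B by (simp add: mult_ac)
    hence "[:c:] * cyc p = (Q * B) * cyc p" by simp
    hence "[:c:] = Q * B" using cnz mult_right_cancel by blast
    hence "degree (Q * B) = 0" by (metis degree_pCons_0)
    moreover have "B \<noteq> 0" using \<open>[:c:] = Q * B\<close> c0 by auto
    ultimately have "degree Q = 0" using Q(1) by (simp add: degree_mult_eq)
    then obtain q0 where "Q = [:q0:]" by (meson degree_eq_zeroE)
    moreover have "map_poly (of_int::int\<Rightarrow>complex) [:q0:] = [:of_int q0:]"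
      by (rule poly_eqI) (simp add: coeff_map_poly coeff_pCons split: nat.split)
    ultimately have False using Q by (simp add: E_def)
    thus ?thesis ..
  qed
qed

definition zz :: "nat \<Rightarrow> complex" where "zz p = cis (2 * pi / real p)"

lemma zz_pow: "zz p ^ i = cis (2 * pi * real i / real p)"
proof -
  have "real i * (2 * pi / real p) = 2 * pi * real i / real p" by simp
  thus ?thesis unfolding zz_def DeMoivre by metis
qed

lemma zz_pow_eq_1: assumes "p > 0" shows "zz p ^ i = 1 \<longleftrightarrow> p dvd i"
proof
  assume "zz p ^ i = 1"
  then obtain n where n: "2 * pi * real i / real p = of_int n * (2 * pi)"
    by (auto simp: zz_pow cis_eq_1_iff)
  hence "real i = of_int n * real p" using assms by (simp add: field_simps)
  hence "int i = n * int p" by (metis of_int_eq_iff of_int_mult of_int_of_nat_eq)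
  hence "int p dvd int i" by simp
  thus "p dvd i" by simp
next
  assume "p dvd i"
  then obtain n where "i = p * n" by auto
  thus "zz p ^ i = 1" using assms by (simp add: zz_pow cis_eq_1_iff) (rule exI[of _ "int n"], simp)
qed

lemma zz_pow_p: assumes "p > 0" shows "zz p ^ p = 1"
  using zz_pow_eq_1[OF assms] by simp

lemma zz_pow_mod: assumes "p > 0" shows "zz p ^ i = zz p ^ (i mod p)"
proof -
  have "p * (i div p) + i mod p = i" by simp
  hence "zz p ^ i = zz p ^ (p * (i div p) + i mod p)" by simp
  also have "\<dots> = zz p ^ (i mod p)" by (simp only: power_add power_mult zz_pow_p[OF assms]) simp
  finally show ?thesis .
qed

lemma sum_zz_pow: assumes "p > 0" shows "(\<Sum>i<p. (zz p ^ m) ^ i) = (if p dvd m then of_nat p else 0)"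
proof (cases "p dvd m")
  case True
  hence "zz p ^ m = 1" using zz_pow_eq_1[OF assms] by simp
  thus ?thesis using True by simp
next
  case False
  hence ne: "zz p ^ m \<noteq> 1" using zz_pow_eq_1[OF assms] by simp
  have "(zz p ^ m) ^ p - 1 = (zz p ^ m - 1) * (\<Sum>i<p. (zz p ^ m) ^ i)" by (rule power_diff_1_eq)
  moreover have "(zz p ^ m) ^ p = 1" by (metis power_mult power_one zz_pow_p[OF assms] mult.commute)
  ultimately show ?thesis using ne False by simp
qed

lemma map_poly_of_int_sum:
  "map_poly (of_int::int\<Rightarrow>'b::comm_ring_1) (sum f A) = (\<Sum>i\<in>A. map_poly of_int (f i))"
  by (rule poly_eqI) (simp add: coeff_map_poly coeff_sum)

lemma cyc_indep:
  assumes pr: "prime p" and h: "(\<Sum>i<p. of_int (a i) * zz p ^ i) = 0"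
  shows "\<forall>i<p. a i = a (p - 1)"
proof -
  have p0: "p > 0" using pr prime_gt_0_nat by blast
  have root: "poly (map_poly of_int (cyc p)) (zz p) = 0"
    using sum_zz_pow[OF p0, of 1] pr
    by (simp add: cyc_monom map_poly_of_int_sum map_poly_monom poly_monom poly_sum prime_nat_iff)
  define P where "P = (\<Sum>i<p. Polynomial.monom (a i - a (p-1)) i)"
  have cP: "Polynomial.coeff P j = (if j < p then a j - a (p-1) else 0)" for j
    by (simp add: P_def coeff_sum coeff_monom)
  have "poly (map_poly of_int P) (zz p) = (\<Sum>i<p. of_int (a i - a (p-1)) * zz p ^ i)"
    by (simp add: P_def map_poly_of_int_sum map_poly_monom poly_monom poly_sum)
  also have "\<dots> = (\<Sum>i<p. of_int (a i) * zz p ^ i) - of_int (a (p-1)) * (\<Sum>i<p. zz p ^ i)"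
    by (simp add: algebra_simps sum_subtractf sum_distrib_left sum_distrib_right)
  also have "\<dots> = 0" using h sum_zz_pow[OF p0, of 1] pr by (simp add: prime_nat_iff)
  finally have E0: "poly (map_poly of_int P) (zz p) = 0" .
  have "P = 0"
  proof (rule ccontr)
    assume "P \<noteq> 0"
    from cyc_min_degree[OF pr root this E0] have "degree P \<ge> p - 1" .
    moreover have "degree P \<le> p - 2"
    proof (rule degree_le, intro allI impI)
      fix i assume i: "p - 2 < i"
      show "Polynomial.coeff P i = 0"
      proof (cases "i < p")
        case True
        hence "i = p - 1" using i prime_ge_2_nat[OF pr] by linarith
        thus ?thesis by (simp add: cP True)
      qed (simp add: cP)
    qed
    ultimately show False using prime_ge_2_nat[OF pr] by linarith
  qed
  thus ?thesis using cP by (metis coeff_0 eq_iff_diff_eq_0)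
qed

locale cA =
  fixes p k :: nat and f :: "'a::{field,finite} \<Rightarrow> 'a" and eps :: int
  assumes cA: "conditionA p k f eps"
begin

abbreviation F where "F \<equiv> (prime_subfield p :: 'a set)"
abbreviation tr where "tr \<equiv> (abs_trace p k :: 'a \<Rightarrow> 'a)"
abbreviation zp where "zp \<equiv> (zeta_pow p :: 'a \<Rightarrow> complex)"

lemma prime_p: "prime p" and odd_p: "odd p" and cardU: "card (UNIV::'a set) = p ^ (2*k)"
  using cA by (auto simp: conditionA_def)

lemma p_gt0: "p > 0" using prime_p prime_gt_0_nat by blast
lemma p_ge2: "p \<ge> 2" using prime_p prime_ge_2_nat by blast
lemma p_ge3: "p \<ge> 3" using p_ge2 odd_p by presburger

lemma CHAR_eq: "CHAR('a) = p"
proof -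
  have pos: "CHAR('a) > 0" by (rule finite_imp_CHAR_pos) simp
  hence prC: "prime CHAR('a)" by (rule prime_CHAR_semidom)
  have "CHAR('a) dvd p ^ (2*k)" using CHAR_dvd_CARD[where 'a='a] cardU by simp
  hence "CHAR('a) dvd p" using prC prime_dvd_power by blast
  thus ?thesis using prC prime_p by (simp add: primes_dvd_imp_eq)
qed

lemma of_nat_eq_iff: "(of_nat i :: 'a) = of_nat j \<longleftrightarrow> i mod p = j mod p"
  using of_nat_eq_iff_cong_CHAR[where 'a='a, of i j] CHAR_eq by (simp add: cong_def)

lemma of_nat_eq_0_iff: "(of_nat i :: 'a) = 0 \<longleftrightarrow> p dvd i"
  using of_nat_eq_0_iff_char_dvd[where 'a='a] CHAR_eq by simp

lemma of_nat_p [simp]: "(of_nat p :: 'a) = 0" using of_nat_eq_0_iff by simp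

lemma of_nat_mod: "(of_nat (i mod p) :: 'a) = of_nat i" using of_nat_eq_iff by simp

lemma k_ge1: "k \<ge> 1"
proof (rule ccontr)
  assume "\<not> k \<ge> 1" hence "k = 0" by simp
  hence "card (UNIV::'a set) = 1" using cardU by simp
  then obtain a where "(UNIV::'a set) = {a}" using card_1_singletonE by blast
  hence "(0::'a) = 1" by (metis UNIV_I singletonD)
  thus False by simp
qed

lemma F_eq: "F = range of_nat"
proof -
  have "range (of_nat::nat\<Rightarrow>'a) \<subseteq> F"
    by (auto simp: prime_subfield_def) (metis of_nat_mod mod_less_divisor p_gt0)
  thus ?thesis by (auto simp: prime_subfield_def)
qed

lemma of_nat_in_F [simp, intro]: "of_nat n \<in> F" by (simp add: F_eq)
lemma zero_in_F [simp, intro]: "0 \<in> F" using of_nat_in_F[of 0] by simp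
lemma one_in_F [simp, intro]: "1 \<in> F" using of_nat_in_F[of 1] by simp

lemma F_cases: assumes "y \<in> F" obtains i where "i < p" "y = of_nat i"
  using assms unfolding prime_subfield_def by auto

lemma F_add [simp, intro]: "a \<in> F \<Longrightarrow> b \<in> F \<Longrightarrow> a + b \<in> F"
  by (auto simp: F_eq) (metis of_nat_add rangeI)
lemma F_mult [simp, intro]: "a \<in> F \<Longrightarrow> b \<in> F \<Longrightarrow> a * b \<in> F"
  by (auto simp: F_eq) (metis of_nat_mult rangeI)
lemma F_uminus [simp, intro]: "a \<in> F \<Longrightarrow> - a \<in> F"
proof -
  assume "a \<in> F"
  then obtain i where i: "a = of_nat i" by (auto simp: F_eq)
  have "i \<le> p * i" using p_gt0 by simp
  hence "i + (p * i - i) = p * i" by simp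
  hence "a + of_nat (p * i - i) = of_nat (p * i)" unfolding i by (metis of_nat_add)
  hence "- a = of_nat (p * i - i)" by (simp add: minus_unique)
  thus ?thesis by simp
qed
lemma F_diff [simp, intro]: "a \<in> F \<Longrightarrow> b \<in> F \<Longrightarrow> a - b \<in> F"
  using F_add F_uminus by (metis diff_conv_add_uminus)
lemma F_power [simp, intro]: "a \<in> F \<Longrightarrow> a ^ n \<in> F"
  by (induction n) auto

lemma inj_of_nat_F: "inj_on (of_nat :: nat \<Rightarrow> 'a) {..<p}"
  by (rule inj_onI) (simp add: of_nat_eq_iff)

lemma F_image: "F = of_nat ` {..<p}" by (auto simp: prime_subfield_def)

lemma card_F: "card F = p"
  using card_image[OF inj_of_nat_F] F_image by simp

lemma finite_F [simp, intro]: "finite F" by simp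

lemma sum_F: "(\<Sum>y\<in>F. g y) = (\<Sum>i<p. g (of_nat i))"
  using sum.reindex[OF inj_of_nat_F, of g] F_image by simp

lemma frob_F: "a \<in> F \<Longrightarrow> a ^ p = a"
proof -
  assume "a \<in> F"
  then obtain i where i: "a = of_nat i" by (auto simp: F_eq)
  have "(of_nat i :: 'a) ^ p = of_nat i"
  proof (induction i)
    case (Suc i)
    have "(of_nat (Suc i) :: 'a) ^ p = (of_nat i + 1) ^ p" by (simp add: add.commute)
    also have "\<dots> = of_nat i ^ p + 1 ^ p" by (rule freshmans_dream) (simp_all add: CHAR_eq prime_p)
    finally show ?case using Suc by simp
  qed (use p_gt0 in simp)
  thus ?thesis using i by simp
qed

lemma frob_F_pow: "a \<in> F \<Longrightarrow> a ^ (p ^ n) = a"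
  by (induction n) (simp_all add: power_Suc power_mult frob_F mult.commute)

lemma F_inverse [simp, intro]: "a \<in> F \<Longrightarrow> inverse a \<in> F"
proof -
  assume a: "a \<in> F"
  show ?thesis
  proof (cases "a = 0")
    case False
    have "p = (p - 2) + 2" using p_ge2 by simp
    hence "a ^ p = a ^ (p - 2) * a ^ 2" by (metis power_add)
    hence "a * a ^ (p - 2) * a = a ^ p" by (simp add: power2_eq_square mult_ac)
    hence "a * a ^ (p - 2) * a = a" using frob_F[OF a] by simp
    hence "a * a ^ (p - 2) = 1" using False by (metis mult_cancel_right2)
    hence "inverse a = a ^ (p - 2)" using False by (metis inverse_unique)
    thus ?thesis using a by simp
  qed simp
qed
lemma F_divide [simp, intro]: "a \<in> F \<Longrightarrow> b \<in> F \<Longrightarrow> a / b \<in> F"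
  by (simp add: divide_inverse)

end

context cA
begin

lemma fp_index_of_nat: "fp_index p (of_nat n :: 'a) = n mod p"
proof -
  have "\<exists>!i. i < p \<and> (of_nat i :: 'a) = of_nat n"
    by (rule ex1I[of _ "n mod p"]) (auto simp: of_nat_eq_iff p_gt0)
  hence "(THE i. i < p \<and> (of_nat i :: 'a) = of_nat n) = n mod p"
    by (rule the1_equality) (auto simp: of_nat_eq_iff p_gt0)
  thus ?thesis by (simp add: fp_index_def)
qed

lemma zp_of_nat: "zp (of_nat n) = zz p ^ n"
  by (simp add: zeta_pow_def fp_index_of_nat zz_def[symmetric] zz_pow_mod[OF p_gt0, symmetric])

lemma zp_0 [simp]: "zp 0 = 1" using zp_of_nat[of 0] by simp
lemma zp_1: "zp 1 = zz p" using zp_of_nat[of 1] by simp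

lemma zp_add: "a \<in> F \<Longrightarrow> b \<in> F \<Longrightarrow> zp (a + b) = zp a * zp b"
  by (auto simp: F_eq zp_of_nat power_add simp flip: of_nat_add)

lemma zp_uminus: "a \<in> F \<Longrightarrow> zp (- a) * zp a = 1"
  by (subst zp_add[symmetric]) auto

lemma zp_nonzero: "a \<in> F \<Longrightarrow> zp a \<noteq> 0"
  using zp_uminus by force

lemma zz_ne1: "zz p \<noteq> 1"
  using zz_pow_eq_1[OF p_gt0, of 1] p_ge2 by auto

lemma sum_zp_F: assumes c: "c \<in> F" shows "(\<Sum>u\<in>F. zp (u * c)) = (if c = 0 then of_nat p else 0)"
proof -
  obtain m where m: "c = of_nat m" using c by (auto simp: F_eq)
  have "(\<Sum>u\<in>F. zp (u * c)) = (\<Sum>i<p. (zz p ^ m) ^ i)"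
    by (simp add: sum_F m zp_of_nat flip: of_nat_mult power_mult) (simp add: mult.commute)
  also have "\<dots> = (if p dvd m then of_nat p else 0)" by (rule sum_zz_pow[OF p_gt0])
  finally show ?thesis by (simp add: m of_nat_eq_0_iff)
qed

lemma power_card_eq: "(x::'a) ^ card (UNIV :: 'a set) = x"
proof (cases "x = 0")
  case False
  have "x * (\<Prod>y\<in>UNIV-{0}. x * y) = x * x ^ (card (UNIV :: 'a set) - 1) * \<Prod>(UNIV-{0})"
    by (simp add: prod.distrib mult_ac)
  also have "x * x ^ (card (UNIV :: 'a set) - 1) = x ^ Suc (card (UNIV :: 'a set) - 1)"
    by (subst power_Suc) auto
  also have "Suc (card (UNIV :: 'a set) - 1) = card (UNIV :: 'a set)"
    using finite_UNIV_card_ge_0[where ?'a = 'a] by simp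
  also have "(\<Prod>y\<in>UNIV-{0}. x * y) = (\<Prod>y\<in>UNIV-{0}. y)"
    by (rule prod.reindex_bij_witness[of _ "\<lambda>y. y / x" "\<lambda>y. x * y"]) (use False in auto)
  finally show ?thesis
    by simp
qed (use finite_UNIV_card_ge_0[where ?'a = 'a] in auto)

lemma pow_q: "(x::'a) ^ (p ^ (2*k)) = x" using power_card_eq cardU by simp

lemma tr_def': "tr x = (\<Sum>i<2*k. x ^ (p ^ i))" by (simp add: abs_trace_def)

lemma frob_add: "((x::'a) + y) ^ (p ^ n) = x ^ (p ^ n) + y ^ (p ^ n)"
  by (rule freshmans_dream') (simp_all add: CHAR_eq prime_p)

lemma tr_add: "tr (x + y) = tr x + tr y"
  by (simp add: tr_def' frob_add sum.distrib)

lemma tr_scale: "c \<in> F \<Longrightarrow> tr (c * x) = c * tr x"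
  by (simp add: tr_def' power_mult_distrib frob_F_pow sum_distrib_left)

lemma tr_uminus: "tr (- x) = - tr x"
  using tr_scale[of "-1" x] by simp

lemma tr_0 [simp]: "tr 0 = 0" using tr_scale[of 0 0] by simp

lemma tr_pow_p: "tr x ^ p = tr x"
proof -
  have "tr x ^ p = (\<Sum>i<2*k. (x ^ (p ^ i)) ^ p)"
    unfolding tr_def' by (rule freshmans_dream_sum) (simp_all add: CHAR_eq prime_p)
  also have "\<dots> = (\<Sum>i<2*k. x ^ (p ^ Suc i))"
    by (rule sum.cong) (simp_all only: power_Suc2 power_mult)
  also have "\<dots> = (\<Sum>i<2*k. x ^ (p ^ i))"
  proof -
    define m where "m = 2 * k - 1"
    have m: "2*k = Suc m" using k_ge1 by (simp add: m_def)
    have "(\<Sum>i<Suc m. x ^ (p ^ Suc i)) = (\<Sum>i<m. x ^ (p ^ Suc i)) + x ^ (p ^ Suc m)" by simp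
    also have "x ^ (p ^ Suc m) = x" using pow_q[of x] m by simp
    also have "(\<Sum>i<m. x ^ (p ^ Suc i)) + x = (\<Sum>i<Suc m. x ^ (p ^ i))"
      by (simp only: sum.lessThan_Suc_shift) simp
    finally show ?thesis using m by simp
  qed
  finally show ?thesis by (simp add: tr_def')
qed

lemma roots_pow_p: "{y::'a. y ^ p = y} = F"
proof -
  define P :: "'a poly" where "P = Polynomial.monom 1 p + [:0,-1:]"
  have P: "poly P y = y ^ p - y" for y by (simp add: P_def poly_monom)
  have degP: "degree P = p" unfolding P_def using p_ge2
    by (subst degree_add_eq_left) (auto simp: degree_monom_eq)
  have "P \<noteq> 0" using degP p_ge2 by auto
  hence "card {y. poly P y = 0} \<le> p" using card_poly_roots_bound degP by metis
  hence c: "card {y::'a. y ^ p = y} \<le> p" by (simp add: P)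
  have sub: "F \<subseteq> {y. y ^ p = y}" using frob_F by auto
  show ?thesis
    by (rule card_seteq[OF _ sub, symmetric]) (use c card_F in auto)
qed

lemma tr_in_F [simp, intro]: "tr x \<in> F"
  using tr_pow_p roots_pow_p by blast

lemma tr_nonzero: "\<exists>x. tr x \<noteq> 0"
proof (rule ccontr)
  assume "\<not> (\<exists>x. tr x \<noteq> 0)"
  hence all: "\<forall>x. tr x = 0" by simp
  define T :: "'a poly" where "T = (\<Sum>i<2*k. Polynomial.monom 1 (p ^ i))"
  have T: "poly T x = tr x" for x by (simp add: T_def poly_sum poly_monom tr_def')
  have inj: "inj_on (\<lambda>i. p ^ i) {..<2*k}" using p_ge2 by (auto intro!: inj_onI simp: power_inject_exp)
  have cT: "Polynomial.coeff T j = (if j \<in> (\<lambda>i. p ^ i) ` {..<2*k} then 1 else 0)" for j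
  proof -
    have "Polynomial.coeff T j = (\<Sum>i<2*k. if p ^ i = j then 1 else 0)" by (simp add: T_def coeff_sum coeff_monom)
    also have "\<dots> = (if j \<in> (\<lambda>i. p ^ i) ` {..<2*k} then 1 else 0)"
    proof (cases "j \<in> (\<lambda>i. p ^ i) ` {..<2*k}")
      case True
      then obtain i0 where i0: "i0 < 2*k" "j = p ^ i0" by auto
      have "(\<Sum>i<2*k. if p ^ i = j then 1 else 0) = (\<Sum>i\<in>{i0}. if p ^ i = j then (1::'a) else 0)"
        by (rule sum.mono_neutral_right) (use i0 p_ge2 in \<open>auto simp: power_inject_exp\<close>)
      thus ?thesis using True i0 by simp
    next
      case False
      hence "\<forall>i<2*k. p ^ i \<noteq> j" by auto
      thus ?thesis using False by simp
    qed
    finally show ?thesis by simp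
  qed
  have "Polynomial.coeff T 1 = 1" using k_ge1 by (simp add: cT image_iff) (rule bexI[of _ 0], auto)
  hence Tnz: "T \<noteq> 0" by auto
  have "degree T \<le> p ^ (2*k - 1)"
  proof (rule degree_le, intro allI impI)
    fix j assume j: "p ^ (2*k - 1) < j"
    have "\<forall>i<2*k. p ^ i \<le> p ^ (2*k-1)" using p_ge2 by (auto intro: power_increasing)
    hence "j \<notin> (\<lambda>i. p ^ i) ` {..<2*k}" using j by fastforce
    thus "Polynomial.coeff T j = 0" by (simp add: cT)
  qed
  also have "\<dots> < p ^ (2*k)" using p_ge2 k_ge1 by (intro power_strict_increasing) auto
  finally have "degree T < card (UNIV::'a set)" using cardU by simp
  moreover have "card {x. poly T x = 0} \<le> degree T" by (rule card_poly_roots_bound[OF Tnz])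
  moreover have "{x. poly T x = 0} = UNIV" using all T by auto
  ultimately show False by simp
qed

lemma exists_tr_1: assumes "b \<noteq> 0" shows "\<exists>x0. tr (b * x0) = 1"
proof -
  obtain x1 where x1: "tr x1 \<noteq> 0" using tr_nonzero by blast
  define t where "t = tr x1"
  have "tr (b * (x1 / (b * t))) = tr (inverse t * x1)" using assms by (simp add: field_simps)
  also have "\<dots> = inverse t * t" by (subst tr_scale) (auto simp: t_def)
  also have "\<dots> = 1" using x1 by (simp add: t_def)
  finally show ?thesis by blast
qed

lemma orth_V: "(\<Sum>x\<in>UNIV. zp (tr (b * x))) = (if b = 0 then of_nat (card (UNIV::'a set)) else 0)"
proof (cases "b = 0")
  case False
  obtain x0 where x0: "tr (b * x0) = 1" using exists_tr_1[OF False] by blast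
  have "(\<Sum>x\<in>UNIV. zp (tr (b * x))) = (\<Sum>x\<in>UNIV. zp (tr (b * (x + x0))))"
    by (rule sum.reindex_bij_witness[of _ "\<lambda>x. x + x0" "\<lambda>x. x - x0"]) auto
  also have "\<dots> = (\<Sum>x\<in>UNIV. zp (tr (b * x)) * zz p)"
    by (simp add: distrib_left tr_add x0 zp_add zp_1)
  also have "\<dots> = (\<Sum>x\<in>UNIV. zp (tr (b * x))) * zz p" by (simp add: sum_distrib_right)
  finally have "(\<Sum>x\<in>UNIV. zp (tr (b * x))) * (zz p - 1) = 0" by (simp add: algebra_simps)
  thus ?thesis using zz_ne1 False by simp
qed simp

end

context cA
begin

definition sqF :: "'a \<Rightarrow> bool" where "sqF y \<longleftrightarrow> (\<exists>z\<in>F. z^2 = y)"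
definition eta :: "'a \<Rightarrow> int" where "eta y = (if y = 0 then 0 else if sqF y then 1 else -1)"
abbreviation Fs where "Fs \<equiv> F - {0}"
definition Sset where "Sset = {y\<in>F. y \<noteq> 0 \<and> sqF y}"
definition Nset where "Nset = {y\<in>F. \<not> sqF y}"

lemma two_ne0: "(2::'a) \<noteq> 0"
proof
  assume "(2::'a) = 0"
  hence "(of_nat 2 :: 'a) = 0" by simp
  hence "p dvd 2" using of_nat_eq_0_iff by blast
  thus False using p_ge3 by (auto dest: dvd_imp_le)
qed

lemma sq_eq_iff: "(z::'a)^2 = w^2 \<longleftrightarrow> z = w \<or> z = - w"
proof -
  have "z^2 - w^2 = (z - w) * (z + w)" by (simp add: power2_eq_square algebra_simps)
  thus ?thesis by (metis add_eq_0_iff2 eq_iff_diff_eq_0 mult_eq_0_iff neg_equal_iff_equal)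
qed

lemma neg_ne: "(w::'a) \<noteq> 0 \<Longrightarrow> w \<noteq> - w"
  using two_ne0 by (metis add_eq_0_iff2 mult_2 mult_eq_0_iff)

lemma card_Fs: "card Fs = p - 1" using card_F by (simp add: card_Diff_singleton)

lemma sqF_0 [simp]: "sqF 0" by (auto simp: sqF_def intro!: bexI[of _ 0])
lemma sqF_sq: "z \<in> F \<Longrightarrow> sqF (z^2)" by (auto simp: sqF_def)

lemma card_Sset: "2 * card Sset = p - 1"
proof -
  have fib: "card {z\<in>Fs. z^2 = y} = 2" if y: "y \<in> Sset" for y
  proof -
    obtain w where w: "w \<in> F" "w^2 = y" using y by (auto simp: Sset_def sqF_def)
    have w0: "w \<noteq> 0" using w y by (auto simp: Sset_def)
    have "{z\<in>Fs. z^2 = y} = {w, -w}" using w w0 by (auto simp: sq_eq_iff)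
    thus ?thesis using neg_ne[OF w0] by simp
  qed
  define A where "A = (\<lambda>y. {z\<in>Fs. z^2 = y})"
  have "Fs = (\<Union>y\<in>Sset. A y)" by (auto simp: Sset_def sqF_sq A_def)
  moreover have "card (\<Union>y\<in>Sset. A y) = (\<Sum>y\<in>Sset. card (A y))"
    by (rule card_UN_disjoint) (auto simp: A_def)
  ultimately have "card Fs = (\<Sum>y\<in>Sset. card (A y))" by simp
  also have "\<dots> = (\<Sum>y\<in>Sset. 2)" by (rule sum.cong, simp, unfold A_def, rule fib, assumption)
  finally show ?thesis using card_Fs by simp
qed

lemma finite_Sset [simp]: "finite Sset" by (simp add: Sset_def)
lemma finite_Nset [simp]: "finite Nset" by (simp add: Nset_def)

lemma Nset_Sset: "Nset = Fs - Sset" by (auto simp: Nset_def Sset_def)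

lemma card_Nset: "2 * card Nset = p - 1"
proof -
  have "Sset \<subseteq> Fs" by (auto simp: Sset_def)
  hence "card Nset = card Fs - card Sset" by (simp add: Nset_Sset card_Diff_subset)
  thus ?thesis using card_Sset card_Fs by simp
qed

lemma nonsq_mult_sq:
  assumes n: "n \<in> F" "\<not> sqF n" and s: "s \<in> F" "s \<noteq> 0" "sqF s"
  shows "\<not> sqF (n * s)"
proof
  assume "sqF (n * s)"
  then obtain z where z: "z \<in> F" "z^2 = n * s" by (auto simp: sqF_def)
  obtain w where w: "w \<in> F" "w^2 = s" using s by (auto simp: sqF_def)
  have "w \<noteq> 0" using w s by auto
  have "(z / w)^2 = z^2 / w^2" by (simp add: power_divide)
  also have "\<dots> = n * s / s" using z w by simp
  also have "\<dots> = n" using s by simp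
  finally have "(z / w)^2 = n" .
  thus False using n z w by (metis F_divide sqF_def)
qed

lemma Nset_image: assumes n: "n \<in> Nset" shows "Nset = (\<lambda>s. n * s) ` Sset"
proof -
  have n': "n \<in> F" "\<not> sqF n" "n \<noteq> 0" using n by (auto simp: Nset_def)
  have sub: "(\<lambda>s. n * s) ` Sset \<subseteq> Nset"
    using nonsq_mult_sq[OF n'(1,2)] n' by (auto simp: Sset_def Nset_def)
  have "card ((\<lambda>s. n * s) ` Sset) = card Sset"
    by (rule card_image) (use n' in \<open>auto intro: inj_onI\<close>)
  also have "\<dots> = card Nset" using card_Sset card_Nset by simp
  finally show ?thesis using card_subset_eq[OF finite_Nset sub] by simp
qed

lemma sq_mult_sq: "sqF a \<Longrightarrow> sqF b \<Longrightarrow> sqF (a * b)"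
  by (auto simp: sqF_def) (metis F_mult power_mult_distrib)

lemma nonsq_mult_nonsq:
  assumes "a \<in> Nset" "b \<in> Nset" shows "sqF (a * b)"
proof -
  obtain s where s: "s \<in> Sset" "b = a * s" using Nset_image[OF assms(1)] assms(2) by auto
  have "a * b = a^2 * s" using s by (simp add: power2_eq_square)
  thus ?thesis using s assms(1) by (metis Nset_def mem_Collect_eq sqF_sq sq_mult_sq Sset_def)
qed

lemma eta_mult: assumes "a \<in> F" "b \<in> F" shows "eta (a * b) = eta a * eta b"
proof (cases "a = 0 \<or> b = 0")
  case True thus ?thesis by (auto simp: eta_def)
next
  case False
  hence ab: "a \<noteq> 0" "b \<noteq> 0" by auto
  show ?thesis
  proof (cases "sqF a"; cases "sqF b")
    assume "sqF a" "sqF b" thus ?thesis using ab by (simp add: eta_def sq_mult_sq)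
  next
    assume "sqF a" "\<not> sqF b"
    hence "\<not> sqF (b * a)" using nonsq_mult_sq assms ab by blast
    thus ?thesis using \<open>sqF a\<close> \<open>\<not> sqF b\<close> ab by (simp add: eta_def mult.commute)
  next
    assume "\<not> sqF a" "sqF b"
    hence "\<not> sqF (a * b)" using nonsq_mult_sq assms ab by blast
    thus ?thesis using \<open>\<not> sqF a\<close> \<open>sqF b\<close> ab by (simp add: eta_def)
  next
    assume "\<not> sqF a" "\<not> sqF b"
    hence "sqF (a * b)" using nonsq_mult_nonsq assms by (simp add: Nset_def)
    thus ?thesis using \<open>\<not> sqF a\<close> \<open>\<not> sqF b\<close> ab by (simp add: eta_def)
  qed
qed

lemma eta_sq_1: "a \<noteq> 0 \<Longrightarrow> eta a * eta a = 1" by (simp add: eta_def)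

lemma eta_1 [simp]: "eta 1 = 1" by (auto simp: eta_def sqF_def intro!: bexI[of _ 1])

lemma eta_pow: "a \<in> F \<Longrightarrow> eta (a ^ n) = eta a ^ n"
  by (induction n) (simp_all add: eta_mult)

lemma eta_inverse: assumes "a \<in> F" shows "eta (inverse a) = eta a"
proof (cases "a = 0")
  case False
  have "eta (inverse a) * eta a = 1" using assms False by (simp flip: eta_mult)
  thus ?thesis using False by (simp add: eta_def split: if_splits)
qed simp

lemma sum_eta: "(\<Sum>y\<in>F. eta y) = 0"
proof -
  have F: "F = {0} \<union> Sset \<union> Nset" by (auto simp: Sset_def Nset_def)
  have "(\<Sum>y\<in>F. eta y) = (\<Sum>y\<in>{0}. eta y) + (\<Sum>y\<in>Sset. eta y) + (\<Sum>y\<in>Nset. eta y)"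
    unfolding F by (subst sum.union_disjoint; auto simp: Sset_def Nset_def)+
  also have "(\<Sum>y\<in>Sset. eta y) = int (card Sset)" by (simp add: eta_def Sset_def)
  also have "(\<Sum>y\<in>Nset. eta y) = (\<Sum>y\<in>Nset. -1)"
    by (rule sum.cong) (auto simp: eta_def Nset_def)
  also have "\<dots> = - int (card Nset)" by simp
  finally show ?thesis using card_Sset card_Nset by (simp add: eta_def)
qed

end

lemma invol_even:
  assumes "finite X" "\<forall>x\<in>X. g x \<in> X \<and> g (g x) = x \<and> g x \<noteq> x"
  shows "even (card X)"
  using assms
proof (induction "card X" arbitrary: X rule: less_induct)
  case less
  show ?case
  proof (cases "X = {}")
    case False
    then obtain x where x: "x \<in> X" by auto
    define Y where "Y = X - {x, g x}"
    have gx: "g x \<in> X" "g x \<noteq> x" using less.prems x by auto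
    have c2: "card {x, g x} = 2" using gx by simp
    have sub: "{x, g x} \<subseteq> X" using gx x by auto
    have "card {x, g x} \<le> card X" using sub less.prems(1) by (rule card_mono[rotated])
    moreover have "card Y = card X - card {x, g x}" unfolding Y_def
      using sub less.prems(1) by (subst card_Diff_subset) (auto intro: finite_subset)
    ultimately have cY: "card Y + 2 = card X" using c2 by simp
    have "\<forall>y\<in>Y. g y \<in> Y \<and> g (g y) = y \<and> g y \<noteq> y"
    proof
      fix y assume y: "y \<in> Y"
      hence yX: "y \<in> X" "y \<noteq> x" "y \<noteq> g x" by (auto simp: Y_def)
      have "g y \<noteq> x" using yX less.prems(2) by metis
      moreover have "g y \<noteq> g x" using yX less.prems(2) x by metis
      ultimately show "g y \<in> Y \<and> g (g y) = y \<and> g y \<noteq> y" using yX less.prems(2) by (auto simp: Y_def)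
    qed
    moreover have "finite Y" using less.prems(1) by (simp add: Y_def)
    moreover have "card Y < card X" using cY by simp
    ultimately have "even (card Y)" using less.hyps by blast
    thus ?thesis using cY by (metis even_add even_numeral)
  qed simp
qed

context cA
begin

definition G :: complex where "G = (\<Sum>y\<in>F. of_int (eta y) * zp y)"

lemma sum_Fs_zp: assumes "c \<in> F" shows "(\<Sum>s\<in>Fs. zp (s * c)) = (if c = 0 then of_nat p else 0) - 1"
proof -
  have "(\<Sum>s\<in>F. zp (s * c)) = zp (0 * c) + (\<Sum>s\<in>Fs. zp (s * c))"
    by (rule sum.remove) auto
  thus ?thesis using sum_zp_F[OF assms] by simp
qed

lemma sum_of_eta: "(\<Sum>y\<in>F. (of_int (eta y) :: complex)) = 0"
  using sum_eta by (metis of_int_0 of_int_sum)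

lemma gauss_scale: assumes a: "a \<in> F"
  shows "(\<Sum>y\<in>F. of_int (eta y) * zp (a * y)) = of_int (eta a) * G"
proof (cases "a = 0")
  case True thus ?thesis using sum_of_eta by (simp add: eta_def)
next
  case False
  have "(\<Sum>y\<in>F. of_int (eta y) * zp (a * y)) = (\<Sum>w\<in>F. of_int (eta (w / a)) * zp w)"
    by (rule sum.reindex_bij_witness[of _ "\<lambda>w. w / a" "\<lambda>y. a * y"]) (use a False in auto)
  also have "\<dots> = (\<Sum>w\<in>F. of_int (eta a) * (of_int (eta w) * zp w))"
  proof (rule sum.cong)
    fix w assume w: "w \<in> F"
    have "eta (w / a) = eta w * eta (inverse a)" using w a by (simp add: divide_inverse eta_mult)
    also have "\<dots> = eta w * eta a" using a by (simp add: eta_inverse)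
    finally show "of_int (eta (w / a)) * zp w = of_int (eta a) * (of_int (eta w) * zp w)" by simp
  qed simp
  also have "\<dots> = of_int (eta a) * G" by (simp add: G_def sum_distrib_left)
  finally show ?thesis .
qed

lemma eta_neg1_sq: "eta (-1) * eta (-1) = 1" by (simp add: eta_def)

lemma gauss_sq: "G * G = of_int (eta (-1)) * of_nat p"
proof -
  have "G * G = (\<Sum>s\<in>F. zp s * (of_int (eta s) * G))"
    by (simp add: G_def sum_distrib_right mult_ac)
  also have "\<dots> = (\<Sum>s\<in>F. zp s * (\<Sum>t\<in>F. of_int (eta t) * zp (s * t)))"
    by (rule sum.cong) (simp_all add: gauss_scale)
  also have "\<dots> = (\<Sum>s\<in>F. \<Sum>t\<in>F. of_int (eta t) * zp (s * (1 + t)))"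
    by (rule sum.cong, simp, simp add: sum_distrib_left, rule sum.cong)
       (auto simp: distrib_left zp_add mult_ac)
  also have "\<dots> = (\<Sum>t\<in>F. of_int (eta t) * (\<Sum>s\<in>F. zp (s * (1 + t))))"
    by (subst sum.swap) (simp add: sum_distrib_left)
  also have "\<dots> = (\<Sum>t\<in>F. of_int (eta t) * (if 1 + t = 0 then of_nat p else 0))"
    by (rule sum.cong) (simp_all add: sum_zp_F)
  also have "\<dots> = (\<Sum>t\<in>F. if t = -1 then of_int (eta (-1)) * of_nat p else 0)"
    by (rule sum.cong) (auto simp: add_eq_0_iff)
  also have "\<dots> = of_int (eta (-1)) * of_nat p" by (simp add: sum.delta)
  finally show ?thesis .
qed

lemma sum_N_zp: assumes w: "w \<in> Fs"
  shows "(\<Sum>c\<in>Nset. zp (w * c)) = (- 1 - of_int (eta w) * G) / 2"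
proof -
  have Fs_eq: "Fs = Sset \<union> Nset" by (auto simp: Sset_def Nset_def)
  have disj: "Sset \<inter> Nset = {}" by (auto simp: Sset_def Nset_def)
  have A: "(\<Sum>c\<in>Sset. zp (w * c)) + (\<Sum>c\<in>Nset. zp (w * c)) = - 1"
  proof -
    have "(\<Sum>c\<in>Fs. zp (c * w)) = -1" using sum_Fs_zp[of w] w by simp
    thus ?thesis unfolding Fs_eq by (subst (asm) sum.union_disjoint) (use disj in \<open>auto simp: mult.commute\<close>)
  qed
  have B: "(\<Sum>c\<in>Sset. zp (w * c)) - (\<Sum>c\<in>Nset. zp (w * c)) = of_int (eta w) * G"
  proof -
    have "(\<Sum>y\<in>F. of_int (eta y) * zp (w * y)) = (\<Sum>y\<in>{0} \<union> Sset \<union> Nset. of_int (eta y) * zp (w * y))"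
      by (rule sum.cong) (auto simp: Sset_def Nset_def)
    also have "\<dots> = (\<Sum>y\<in>Sset. of_int (eta y) * zp (w * y)) + (\<Sum>y\<in>Nset. of_int (eta y) * zp (w * y))"
      by (subst sum.union_disjoint; (subst sum.union_disjoint)?) (auto simp: Sset_def Nset_def eta_def)
    also have "(\<Sum>y\<in>Sset. of_int (eta y) * zp (w * y)) = (\<Sum>y\<in>Sset. zp (w * y))"
      by (rule sum.cong) (auto simp: Sset_def eta_def)
    also have "(\<Sum>y\<in>Nset. of_int (eta y) * zp (w * y)) = (\<Sum>y\<in>Nset. - zp (w * y))"
      by (rule sum.cong) (auto simp: Nset_def eta_def)
    finally show ?thesis using gauss_scale[of w] w by (simp add: sum_negf)
  qed
  define X where "X = (\<Sum>c\<in>Sset. zp (w * c))"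
  define Y where "Y = (\<Sum>c\<in>Nset. zp (w * c))"
  have "2 * Y = (X + Y) - (X - Y)" by simp
  also have "\<dots> = - 1 - of_int (eta w) * G" using A B by (simp add: X_def Y_def)
  finally have "Y = (- 1 - of_int (eta w) * G) / 2" by (simp add: field_simps)
  thus ?thesis by (simp only: Y_def)
qed

lemma pow_bij:
  assumes cop: "coprime e (p - 1)"
  shows "inj_on (\<lambda>t. t ^ e) Fs" "(\<lambda>t. t ^ e) ` Fs = Fs"
proof -
  have one: "w = 1" if w: "w \<in> Fs" "w ^ e = 1" for w
  proof -
    have wp: "w ^ (p - 1) = 1"
    proof -
      have "p = Suc (p - 1)" using p_gt0 by simp
      hence "w ^ p = w ^ (p - 1) * w" by (metis power_Suc2)
      hence "w ^ (p - 1) * w = w" using frob_F w by simp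
      moreover have "w \<noteq> 0" using w by simp
      ultimately show ?thesis by (simp add: mult_cancel_right2)
    qed
    have e0: "e \<noteq> 0"
    proof
      assume "e = 0" hence "p - 1 = 1" using cop by simp
      thus False using p_ge3 by simp
    qed
    obtain x y where xy: "e * x = (p - 1) * y + gcd e (p - 1)" using bezout_nat[OF e0] by blast
    hence "e * x = (p - 1) * y + 1" using cop by simp
    hence "w ^ (e * x) = w ^ ((p - 1) * y) * w" by (simp add: power_add)
    thus "w = 1" using w(2) wp by (simp add: power_mult)
  qed
  show inj: "inj_on (\<lambda>t. t ^ e) Fs"
  proof (rule inj_onI)
    fix s t assume st: "s \<in> Fs" "t \<in> Fs" "s ^ e = t ^ e"
    have "(s / t) ^ e = 1" using st by (simp add: power_divide)
    moreover have "s / t \<in> Fs" using st by auto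
    ultimately have "s / t = 1" using one by blast
    thus "s = t" using st by simp
  qed
  have sub: "(\<lambda>t. t ^ e) ` Fs \<subseteq> Fs" by auto
  show "(\<lambda>t. t ^ e) ` Fs = Fs"
    by (rule card_subset_eq) (use sub card_image[OF inj] in auto)
qed

end

context cA
begin

lemma f_in_F [simp, intro]: "f x \<in> F" and f0 [simp]: "f 0 = 0" and f_even: "f (- x) = f x"
  and eps_pm: "eps = 1 \<or> eps = -1"
  using cA by (auto simp: conditionA_def)

definition lex where "lex = (SOME l::int. gcd (l - 1) (int p - 1) = 1 \<and>
        (\<forall>\<alpha>\<in>F. \<forall>x. f (\<alpha> * x) = \<alpha> powi l * f x))"

lemma lex_prop: "gcd (lex - 1) (int p - 1) = 1" "\<And>\<alpha> x. \<alpha> \<in> F \<Longrightarrow> f (\<alpha> * x) = \<alpha> powi lex * f x"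
proof -
  have "\<exists>l::int. gcd (l - 1) (int p - 1) = 1 \<and> (\<forall>\<alpha>\<in>F. \<forall>x. f (\<alpha> * x) = \<alpha> powi l * f x)"
    using cA by (auto simp: conditionA_def)
  hence "gcd (lex - 1) (int p - 1) = 1 \<and> (\<forall>\<alpha>\<in>F. \<forall>x. f (\<alpha> * x) = \<alpha> powi lex * f x)"
    unfolding lex_def by (rule someI_ex)
  thus "gcd (lex - 1) (int p - 1) = 1" "\<And>\<alpha> x. \<alpha> \<in> F \<Longrightarrow> f (\<alpha> * x) = \<alpha> powi lex * f x" by auto
qed

definition fs where "fs = (SOME fs::'a\<Rightarrow>'a. (\<forall>b. fs b \<in> F) \<and>
        (\<forall>b. walsh p k f b = of_int eps * of_nat (p ^ k) * zp (fs b)))"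

lemma fs_prop: "fs b \<in> F" "walsh p k f b = of_int eps * of_nat (p ^ k) * zp (fs b)"
proof -
  have "\<exists>fs::'a\<Rightarrow>'a. (\<forall>b. fs b \<in> F) \<and> (\<forall>b. walsh p k f b = of_int eps * of_nat (p ^ k) * zp (fs b))"
    using cA by (auto simp: conditionA_def)
  hence "(\<forall>b. fs b \<in> F) \<and> (\<forall>b. walsh p k f b = of_int eps * of_nat (p ^ k) * zp (fs b))"
    unfolding fs_def by (rule someI_ex)
  thus "fs b \<in> F" "walsh p k f b = of_int eps * of_nat (p ^ k) * zp (fs b)" by auto
qed

lemma fermat_F: assumes w: "w \<in> Fs" shows "w ^ (p - 1) = 1"
proof -
  have "p = Suc (p - 1)" using p_gt0 by simp
  hence "w ^ p = w ^ (p - 1) * w" by (metis power_Suc2)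
  hence "w ^ (p - 1) * w = w" using frob_F w by simp
  moreover have "w \<noteq> 0" using w by simp
  ultimately show ?thesis by (simp add: mult_cancel_right2)
qed

definition L where "L = nat (lex mod (int p - 1)) + (p - 1)"
definition e where "e = L - 1"

lemma L_eq: "L = e + 1" using p_ge3 by (simp add: e_def L_def)

lemma hom: assumes a: "a \<in> Fs" shows "f (a * x) = a ^ L * f x"
proof -
  define m where "m = int p - 1"
  have m: "m = int (p - 1)" using p_ge3 by (simp add: m_def of_nat_diff)
  have a0: "a \<noteq> 0" using a by simp
  have am: "a powi m = 1" using fermat_F[OF a] by (simp add: m)
  have "lex = m * (lex div m) + lex mod m" by simp
  hence "a powi lex = a powi (m * (lex div m)) * a powi (lex mod m)"
    by (metis power_int_add a0)
  also have "a powi (m * (lex div m)) = 1" by (simp add: power_int_mult am)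
  also have "a powi (lex mod m) = a ^ nat (lex mod m)"
  proof -
    have "lex mod m \<ge> 0" using p_ge3 by (simp add: m_def)
    hence "lex mod m = int (nat (lex mod m))" by simp
    thus ?thesis by (metis power_int_of_nat)
  qed
  also have "a ^ nat (lex mod m) = a ^ L"
  proof -
    have "a ^ L = a ^ nat (lex mod m) * a ^ (p - 1)" by (simp add: L_def power_add m_def)
    thus ?thesis using fermat_F[OF a] by simp
  qed
  finally show ?thesis using lex_prop(2)[of a x] a by simp
qed

lemma coprime_e: "coprime e (p - 1)"
proof -
  define m where "m = int p - 1"
  have m: "m = int (p - 1)" using p_ge3 by (simp add: m_def of_nat_diff)
  have mpos: "m > 0" using p_ge3 by (simp add: m_def)
  have "int e = lex mod m + m - 1" using p_ge3 mpos
    by (simp add: e_def L_def m_def of_nat_diff)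
  also have "\<dots> = (1 - lex div m) * m + (lex - 1)"
    by (simp add: algebra_simps)
  finally have "gcd m (int e) = gcd m (lex - 1)" by (simp add: gcd_add_mult)
  also have "\<dots> = 1" using lex_prop(1) by (simp add: m_def gcd.commute)
  finally have "gcd (int (p - 1)) (int e) = 1" by (simp add: m)
  hence "gcd (p - 1) e = 1" by (metis gcd_int_int_eq of_nat_eq_1_iff)
  thus ?thesis by (simp add: coprime_iff_gcd_eq_1 gcd.commute)
qed

lemma odd_e: "odd e"
proof
  assume "even e"
  moreover have "even (p - 1)" using odd_p p_ge3 by simp
  ultimately have "is_unit (2::nat)" using coprime_common_divisor[OF coprime_e] by blast
  thus False by simp
qed

lemma fiber_sum:
  fixes g :: "'a \<Rightarrow> 'a"
  assumes g: "\<And>y. g y \<in> F"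
  shows "(\<Sum>y\<in>UNIV. h (g y)) = (\<Sum>c\<in>F. of_nat (card {y. g y = c}) * h c)"
proof -
  have "(\<Sum>y\<in>UNIV. h (g y)) = (\<Sum>c\<in>F. \<Sum>y\<in>{y\<in>UNIV. g y = c}. h (g y))"
    by (rule sum.group[symmetric]) (use g in auto)
  also have "\<dots> = (\<Sum>c\<in>F. of_nat (card {y. g y = c}) * h c)"
    by (rule sum.cong) auto
  finally show ?thesis .
qed

definition Nb where "Nb b c = card {y::'a. f y + tr (b * y) = c}"

lemma walsh_expand: "walsh p k f b = (\<Sum>i<p. of_nat (Nb b (of_nat i)) * zz p ^ i)"
proof -
  have "walsh p k f b = (\<Sum>y\<in>UNIV. zp (f y + tr (b * y)))" by (simp add: walsh_def)
  also have "\<dots> = (\<Sum>c\<in>F. of_nat (Nb b c) * zp c)"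
    unfolding Nb_def by (rule fiber_sum) auto
  also have "\<dots> = (\<Sum>i<p. of_nat (Nb b (of_nat i)) * zz p ^ i)" by (simp add: sum_F zp_of_nat)
  finally show ?thesis .
qed

abbreviation nn where "nn \<equiv> int (p ^ k)"

lemma Nb_formula: "\<exists>A::int. \<forall>c\<in>F. int (Nb b c) = A + (if c = fs b then eps * nn else 0)"
proof -
  obtain j0 where j0: "j0 < p" "fs b = of_nat j0" using fs_prop(1)[of b] F_cases by blast
  define a where "a i = int (Nb b (of_nat i)) - (if i = j0 then eps * nn else 0)" for i
  have "(\<Sum>i<p. of_int (a i) * zz p ^ i) =
        (\<Sum>i<p. of_nat (Nb b (of_nat i)) * zz p ^ i - (if i = j0 then of_int (eps * nn) * zz p ^ i else 0))"
    by (rule sum.cong) (auto simp: a_def algebra_simps)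
  also have "\<dots> = (\<Sum>i<p. of_nat (Nb b (of_nat i)) * zz p ^ i) - (\<Sum>i<p. (if i = j0 then of_int (eps * nn) * zz p ^ i else 0))"
    by (simp only: sum_subtractf)
  also have "(\<Sum>i<p. (if i = j0 then of_int (eps * nn) * zz p ^ i else 0)) = of_int (eps * nn) * zz p ^ j0"
    using j0 by (simp add: sum.delta)
  also have "(\<Sum>i<p. of_nat (Nb b (of_nat i)) * zz p ^ i) = of_int (eps * nn) * zz p ^ j0"
    using walsh_expand[of b] fs_prop(2)[of b] j0 by (simp add: zp_of_nat)
  finally have "(\<Sum>i<p. of_int (a i) * zz p ^ i) = 0" by simp
  from cyc_indep[OF prime_p this] have eq: "\<forall>i<p. a i = a (p - 1)" .
  show ?thesis
  proof (intro exI ballI)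
    fix c assume c: "c \<in> F"
    then obtain i where i: "i < p" "c = of_nat i" using F_cases by blast
    have "(c = fs b) \<longleftrightarrow> i = j0" using i j0 by (simp add: of_nat_eq_iff)
    thus "int (Nb b c) = a (p - 1) + (if c = fs b then eps * nn else 0)"
      using eq i by (auto simp: a_def)
  qed
qed

end

context cA
begin

lemma Nb_sum: "int (card (UNIV::'a set)) = (\<Sum>c\<in>F. int (Nb b c))"
proof -
  have "(\<Sum>y\<in>(UNIV::'a set). (\<lambda>_. 1::int) (f y + tr (b * y))) = (\<Sum>c\<in>F. of_nat (Nb b c) * (\<lambda>_. 1::int) c)"
    unfolding Nb_def by (rule fiber_sum) auto
  thus ?thesis by simp
qed

lemma Nb_A: assumes "\<forall>c\<in>F. int (Nb b c) = A + (if c = fs b then eps * nn else 0)"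
  shows "int p * A + eps * nn = int (p ^ (2*k))"
proof -
  have "int (p ^ (2*k)) = (\<Sum>c\<in>F. A + (if c = fs b then eps * nn else 0))"
    using Nb_sum[of b] cardU assms by simp
  also have "\<dots> = int p * A + eps * nn" using fs_prop(1)[of b] by (simp add: sum.distrib card_F)
  finally show ?thesis by simp
qed

lemma sum_t: assumes t: "t \<in> Fs"
  shows "(\<Sum>y\<in>UNIV. zp (t * (f y + tr (b * y)))) = of_int eps * of_nat (p ^ k) * zp (t * fs b)"
proof -
  obtain A where A: "\<forall>c\<in>F. int (Nb b c) = A + (if c = fs b then eps * nn else 0)"
    using Nb_formula by blast
  have "(\<Sum>y\<in>UNIV. zp (t * (f y + tr (b * y)))) = (\<Sum>c\<in>F. of_nat (Nb b c) * zp (t * c))"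
    unfolding Nb_def by (rule fiber_sum) auto
  also have "\<dots> = (\<Sum>c\<in>F. of_int A * zp (c * t) + (if c = fs b then of_int (eps * nn) * zp (t * fs b) else 0))"
  proof (rule sum.cong)
    fix c assume c: "c \<in> F"
    have "(of_nat (Nb b c) :: complex) = of_int (int (Nb b c))" by simp
    also have "\<dots> = of_int A + (if c = fs b then of_int (eps * nn) else 0)" using A c by simp
    finally show "of_nat (Nb b c) * zp (t * c) = of_int A * zp (c * t) + (if c = fs b then of_int (eps * nn) * zp (t * fs b) else 0)"
      by (simp add: algebra_simps mult.commute)
  qed simp
  also have "\<dots> = of_int A * (\<Sum>c\<in>F. zp (c * t)) + of_int (eps * nn) * zp (t * fs b)"
    using fs_prop(1)[of b] by (simp add: sum.distrib sum_distrib_left sum.delta)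
  also have "(\<Sum>c\<in>F. zp (c * t)) = 0" using sum_zp_F[of t] t by simp
  finally show ?thesis by simp
qed

lemma fs0: "fs 0 = 0"
proof (rule ccontr)
  assume ne: "fs 0 \<noteq> 0"
  obtain A where A: "\<forall>c\<in>F. int (Nb 0 c) = A + (if c = fs 0 then eps * nn else 0)"
    using Nb_formula by blast
  have pA: "int p * A + eps * nn = int (p ^ (2*k))" by (rule Nb_A[OF A])
  have "int (Nb 0 0) = A" using A ne by auto
  define X where "X = {y::'a. f y = 0}"
  have NbX: "Nb 0 0 = card X" by (simp add: Nb_def X_def)
  have "even (card (X - {0}))"
    by (rule invol_even[where g = uminus]) (auto simp: X_def f_even neg_ne two_ne0)
  moreover have "card X = Suc (card (X - {0}))"
    by (subst card.remove[of X 0]) (auto simp: X_def)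
  ultimately have oX: "odd (card X)" by simp
  have "odd (int (p ^ (2*k)))" using odd_p by simp
  moreover have "odd (eps * nn)" using odd_p eps_pm by auto
  ultimately have "even (int p * A)" using pA by (metis even_add)
  hence "even A" using odd_p by simp
  hence "even (Nb 0 0)" using \<open>int (Nb 0 0) = A\<close> by (metis even_of_nat)
  thus False using oX NbX by simp
qed

definition W where "W u b = (\<Sum>x\<in>UNIV. zp (u * f x + tr (b * x)))"

lemma W0: "W 0 b = (if b = 0 then of_nat (card (UNIV::'a set)) else 0)"
  using orth_V[of b] by (simp add: W_def)

lemma Wt: assumes t: "t \<in> Fs"
  shows "W (inverse (t ^ e)) b = of_int eps * of_nat (p ^ k) * zp (t * fs b)"
proof -
  define u where "u = inverse (t ^ e)"
  have ut: "u * t ^ L = t" using t by (simp add: u_def L_eq field_simps)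
  have "W u b = (\<Sum>y\<in>UNIV. zp (u * f (t * y) + tr (b * (t * y))))"
    unfolding W_def by (rule sum.reindex_bij_witness[of _ "\<lambda>y. t * y" "\<lambda>x. x / t"]) (use t in auto)
  also have "\<dots> = (\<Sum>y\<in>UNIV. zp (t * (f y + tr (b * y))))"
  proof (rule sum.cong)
    fix y
    have "u * f (t * y) = u * t ^ L * f y" using hom[OF t] by simp
    also have "\<dots> = t * f y" using ut by simp
    finally have 1: "u * f (t * y) = t * f y" .
    have "tr (b * (t * y)) = t * tr (b * y)" using tr_scale[of t "b * y"] t by (simp add: mult_ac)
    thus "zp (u * f (t * y) + tr (b * (t * y))) = zp (t * (f y + tr (b * y)))"
      using 1 by (simp add: distrib_left)
  qed simp
  also have "\<dots> = of_int eps * of_nat (p ^ k) * zp (t * fs b)" by (rule sum_t[OF t])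
  finally show ?thesis by (simp add: u_def)
qed

end

context cA
begin

definition D where "D = {x::'a. x \<noteq> 0 \<and> is_nonsquare_Fp p (f x)}"

lemma D_eq: "D = {x. f x \<in> Nset}"
  by (auto simp: D_def is_nonsquare_Fp_def Nset_def sqF_def)

definition Sh where "Sh b = (\<Sum>x\<in>D. zp (tr (b * x)))"

abbreviation Ec where "Ec \<equiv> (of_int eps * of_nat (p ^ k) :: complex)"

lemma ind: "of_nat p * (if f x \<in> Nset then 1 else 0) = (\<Sum>c\<in>Nset. \<Sum>u\<in>F. zp (u * (f x - c)))"
proof -
  have "(\<Sum>c\<in>Nset. \<Sum>u\<in>F. zp (u * (f x - c))) = (\<Sum>c\<in>Nset. if f x = c then of_nat p else 0)"
    by (rule sum.cong) (auto simp: sum_zp_F Nset_def)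
  also have "\<dots> = (if f x \<in> Nset then of_nat p else 0)" by (simp add: sum.delta')
  finally show ?thesis by simp
qed

lemma Sh_main: "of_nat p * Sh b = (\<Sum>u\<in>F. \<Sum>c\<in>Nset. zp (- (u * c)) * W u b)"
proof -
  have "(\<Sum>x\<in>UNIV. (if f x \<in> Nset then 1 else 0) * zp (tr (b * x))) = (\<Sum>x\<in>UNIV. if f x \<in> Nset then zp (tr (b * x)) else 0)"
    by (rule sum.cong) auto
  also have "\<dots> = (\<Sum>x\<in>{x\<in>UNIV. f x \<in> Nset}. zp (tr (b * x)))"
    by (rule sum.inter_filter[symmetric]) simp
  finally have "Sh b = (\<Sum>x\<in>UNIV. (if f x \<in> Nset then 1 else 0) * zp (tr (b * x)))"
    unfolding Sh_def D_eq by simp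
  hence "of_nat p * Sh b = (\<Sum>x\<in>UNIV. (of_nat p * (if f x \<in> Nset then 1 else 0)) * zp (tr (b * x)))"
    by (simp add: sum_distrib_left mult_ac)
  also have "\<dots> = (\<Sum>x\<in>UNIV. \<Sum>c\<in>Nset. \<Sum>u\<in>F. zp (u * (f x - c)) * zp (tr (b * x)))"
    by (simp only: ind sum_distrib_right)
  also have "\<dots> = (\<Sum>x\<in>UNIV. \<Sum>c\<in>Nset. \<Sum>u\<in>F. zp (- (u * c)) * zp (u * f x + tr (b * x)))"
  proof (intro sum.cong refl)
    fix x c u assume c: "c \<in> Nset" and u: "u \<in> F"
    have cF: "c \<in> F" using c by (simp add: Nset_def)
    have "u * (f x - c) = - (u * c) + u * f x" by (simp add: algebra_simps)
    moreover have "zp (- (u * c) + u * f x) = zp (- (u * c)) * zp (u * f x)" by (rule zp_add) (use u cF in auto)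
    ultimately have "zp (u * (f x - c)) = zp (- (u * c)) * zp (u * f x)" by simp
    moreover have "zp (u * f x + tr (b * x)) = zp (u * f x) * zp (tr (b * x))" using u by (simp add: zp_add)
    ultimately show "zp (u * (f x - c)) * zp (tr (b * x)) = zp (- (u * c)) * zp (u * f x + tr (b * x))"
      by (simp add: mult_ac)
  qed
  also have "\<dots> = (\<Sum>c\<in>Nset. \<Sum>x\<in>UNIV. \<Sum>u\<in>F. zp (- (u * c)) * zp (u * f x + tr (b * x)))"
    by (rule sum.swap)
  also have "\<dots> = (\<Sum>c\<in>Nset. \<Sum>u\<in>F. \<Sum>x\<in>UNIV. zp (- (u * c)) * zp (u * f x + tr (b * x)))"
    by (rule sum.cong[OF refl], rule sum.swap)
  also have "\<dots> = (\<Sum>u\<in>F. \<Sum>c\<in>Nset. \<Sum>x\<in>UNIV. zp (- (u * c)) * zp (u * f x + tr (b * x)))"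
    by (rule sum.swap)
  also have "\<dots> = (\<Sum>u\<in>F. \<Sum>c\<in>Nset. zp (- (u * c)) * W u b)"
    by (simp add: W_def sum_distrib_left)
  finally show ?thesis .
qed

lemma phi_bij: "inj_on (\<lambda>t. inverse (t ^ e)) Fs" "(\<lambda>t. inverse (t ^ e)) ` Fs = Fs"
proof -
  have i1: "inj_on (\<lambda>t. t ^ e) Fs" and i2: "(\<lambda>t. t ^ e) ` Fs = Fs" using pow_bij[OF coprime_e] by auto
  show "inj_on (\<lambda>t. inverse (t ^ e)) Fs"
    using i1 by (auto simp: inj_on_def)
  have "(\<lambda>t. inverse (t ^ e)) ` Fs = inverse ` ((\<lambda>t. t ^ e) ` Fs)" by (simp add: image_image)
  also have "\<dots> = inverse ` Fs" using i2 by simp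
  also have "\<dots> = Fs"
  proof
    show "inverse ` Fs \<subseteq> Fs" by auto
    show "Fs \<subseteq> inverse ` Fs"
    proof
      fix x assume "x \<in> Fs"
      hence "inverse x \<in> Fs" "x = inverse (inverse x)" by auto
      thus "x \<in> inverse ` Fs" by blast
    qed
  qed
  finally show "(\<lambda>t. inverse (t ^ e)) ` Fs = Fs" .
qed

lemma eta_pm1: "a \<in> Fs \<Longrightarrow> eta a = 1 \<or> eta a = -1" by (simp add: eta_def)

lemma eta_w: assumes t: "t \<in> Fs" shows "eta (- inverse (t ^ e)) = eta (-1) * eta t"
proof -
  have "eta (- inverse (t ^ e)) = eta (-1 * inverse (t ^ e))" by simp
  also have "\<dots> = eta (-1) * eta (inverse (t ^ e))" using t by (intro eta_mult) auto
  also have "eta (inverse (t ^ e)) = eta t ^ e" using t by (simp add: eta_inverse eta_pow)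
  also have "eta t ^ e = eta t" using eta_pm1[OF t] odd_e by auto
  finally show ?thesis .
qed

lemma Sh_formula:
  "of_nat p * Sh b = of_nat (card Nset) * W 0 b
     + Ec / 2 * (1 - (if fs b = 0 then of_nat p else 0) - of_int (eta (fs b)) * of_nat p)"
proof -
  define a where "a = fs b"
  have aF: "a \<in> F" using fs_prop(1) by (simp add: a_def)
  define H where "H u = (\<Sum>c\<in>Nset. zp (- (u * c)) * W u b)" for u
  have "of_nat p * Sh b = (\<Sum>u\<in>F. H u)" by (simp add: Sh_main H_def)
  also have "\<dots> = H 0 + (\<Sum>u\<in>Fs. H u)" by (rule sum.remove) auto
  also have "H 0 = of_nat (card Nset) * W 0 b" by (simp add: H_def)
  also have "(\<Sum>u\<in>Fs. H u) = (\<Sum>t\<in>Fs. H (inverse (t ^ e)))"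
    using sum.reindex[OF phi_bij(1), of H] phi_bij(2) by simp
  also have "\<dots> = (\<Sum>t\<in>Fs. ((- 1 - of_int (eta (-1)) * of_int (eta t) * G) / 2) * (Ec * zp (t * a)))"
  proof (rule sum.cong[OF refl])
    fix t assume t: "t \<in> Fs"
    have wFs: "- inverse (t ^ e) \<in> Fs" using t by auto
    have "H (inverse (t ^ e)) = (\<Sum>c\<in>Nset. zp ((- inverse (t ^ e)) * c)) * W (inverse (t ^ e)) b"
      by (simp add: H_def sum_distrib_right)
    also have "(\<Sum>c\<in>Nset. zp ((- inverse (t ^ e)) * c)) = (- 1 - of_int (eta (- inverse (t ^ e))) * G) / 2"
      by (rule sum_N_zp[OF wFs])
    also have "W (inverse (t ^ e)) b = Ec * zp (t * a)" using Wt[OF t] by (simp add: a_def)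
    finally show "H (inverse (t ^ e)) = ((- 1 - of_int (eta (-1)) * of_int (eta t) * G) / 2) * (Ec * zp (t * a))"
      using eta_w[OF t] by simp
  qed
  also have "\<dots> = Ec / 2 * (- (\<Sum>t\<in>Fs. zp (t * a)) - of_int (eta (-1)) * G * (\<Sum>t\<in>Fs. of_int (eta t) * zp (a * t)))"
    by (simp add: sum_distrib_left sum_distrib_right sum_subtractf sum_negf algebra_simps diff_divide_distrib)
  also have "(\<Sum>t\<in>Fs. zp (t * a)) = (if a = 0 then of_nat p else 0) - 1" by (rule sum_Fs_zp[OF aF])
  also have "(\<Sum>t\<in>Fs. of_int (eta t) * zp (a * t)) = of_int (eta a) * G"
  proof -
    have "(\<Sum>t\<in>F. of_int (eta t) * zp (a * t)) = of_int (eta 0) * zp (a * 0) + (\<Sum>t\<in>Fs. of_int (eta t) * zp (a * t))"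
      by (rule sum.remove) auto
    thus ?thesis using gauss_scale[OF aF] by (simp add: eta_def)
  qed
  also have "of_int (eta (-1)) * G * (of_int (eta a) * G) = of_int (eta (-1) * eta (-1)) * of_int (eta a) * (of_nat p :: complex)"
    using gauss_sq by (simp add: algebra_simps)
  also have "of_int (eta (-1) * eta (-1)) = (1::complex)" using eta_neg1_sq by simp
  finally show ?thesis by (simp add: a_def algebra_simps)
qed

end

context cA
begin

definition rr where "rr = real_of_int eps * real (p ^ k) * (1 + real p) / (2 * real p)"
definition ss where "ss = real_of_int eps * real (p ^ k) * (1 - real p) / (2 * real p)"

lemma card_Nset_c: "(of_nat (card Nset) :: complex) = (of_nat p - 1) / 2"
proof -
  have "(of_nat (2 * card Nset) :: complex) = of_nat (p - 1)" using card_Nset by simp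
  thus ?thesis using p_ge3 by (simp add: of_nat_diff field_simps)
qed

lemma val_eq: assumes a: "a \<in> F"
  shows "(1 - (if a = 0 then of_nat p else 0) - of_int (eta a) * of_nat p :: complex)
         = (if a \<in> Nset then 1 + of_nat p else 1 - of_nat p)"
  using a by (auto simp: eta_def Nset_def)

lemma Sh_nonzero: assumes b: "b \<noteq> 0"
  shows "Sh b = complex_of_real (if fs b \<in> Nset then rr else ss)"
proof -
  have "of_nat p * Sh b = Ec / 2 * (if fs b \<in> Nset then 1 + of_nat p else 1 - of_nat p)"
    using Sh_formula[of b] W0[of b] b val_eq[OF fs_prop(1)] by simp
  hence "Sh b = Ec * (if fs b \<in> Nset then 1 + of_nat p else 1 - of_nat p) / (2 * of_nat p)"
    using p_gt0 by (simp add: field_simps)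
  thus ?thesis by (simp add: rr_def ss_def)
qed

lemma Sh_zero: "Sh 0 = of_nat (card D)" by (simp add: Sh_def)

lemma card_D_c: "(of_nat (card D) :: complex) = ((of_nat p - 1) * of_nat (p ^ (2*k)) + Ec * (1 - of_nat p)) / (2 * of_nat p)"
proof -
  have "of_nat p * Sh 0 = (of_nat p - 1) / 2 * of_nat (p ^ (2*k)) + Ec / 2 * (1 - of_nat p)"
    using Sh_formula[of 0] W0[of 0] fs0 cardU card_Nset_c by (simp add: eta_def)
  hence "2 * of_nat p * Sh 0 = 2 * ((of_nat p - 1) / 2 * of_nat (p ^ (2*k)) + Ec / 2 * (1 - of_nat p))"
    by (simp only: mult.assoc)
  also have "\<dots> = (of_nat p - 1) * of_nat (p ^ (2*k)) + Ec * (1 - of_nat p)"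
    by (simp only: distrib_left) (simp add: field_simps)
  finally have "2 * of_nat p * Sh 0 = (of_nat p - 1) * of_nat (p ^ (2*k)) + Ec * (1 - of_nat p)" .
  moreover have "2 * of_nat p \<noteq> (0::complex)" using p_gt0 by simp
  ultimately show ?thesis by (simp add: Sh_zero eq_divide_eq mult.commute)
qed

lemma Sh_quad: assumes b: "b \<noteq> 0"
  shows "Sh b * Sh b = complex_of_real (rr + ss) * Sh b - complex_of_real (rr * ss)"
  using Sh_nonzero[OF b] by (auto simp: algebra_simps)

abbreviation chi where "chi b x \<equiv> zp (tr (b * x))"

lemma chi_add: "chi b (x + y) = chi b x * chi b y"
  by (simp add: distrib_left tr_add zp_add)

lemma orth_V': "(\<Sum>b\<in>UNIV. chi b z) = (if z = 0 then of_nat (card (UNIV::'a set)) else 0)"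
  using orth_V[of z] by (simp add: mult.commute)

lemma D_neg: "x \<in> D \<Longrightarrow> - x \<in> D" by (simp add: D_eq f_even)

lemma Sh_neg: "(\<Sum>y\<in>D. chi b (- y)) = Sh b"
  unfolding Sh_def
  by (rule sum.reindex_bij_witness[of _ uminus uminus]) (auto simp: D_neg)

definition Delta where "Delta g = card {(x, y). x \<in> D \<and> y \<in> D \<and> x - y = g}"

lemma Delta_sum: "(of_nat (Delta g) :: complex) = (\<Sum>x\<in>D. \<Sum>y\<in>D. if x - y = g then 1 else 0)"
proof -
  have "{(x, y). x \<in> D \<and> y \<in> D \<and> x - y = g} = {z\<in>D \<times> D. fst z - snd z = g}" by auto
  hence "Delta g = card {z\<in>D \<times> D. fst z - snd z = g}" by (simp add: Delta_def)
  hence "(of_nat (Delta g) :: complex) = (\<Sum>z\<in>D \<times> D. if fst z - snd z = g then 1 else 0)"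
    by (simp add: sum.inter_filter[symmetric])
  also have "\<dots> = (\<Sum>x\<in>D. \<Sum>y\<in>D. if x - y = g then 1 else 0)"
    by (simp add: sum.cartesian_product split_def)
  finally show ?thesis .
qed

lemma Delta_fourier:
  "of_nat (card (UNIV::'a set)) * of_nat (Delta g) = (\<Sum>b\<in>UNIV. Sh b * Sh b * chi b (- g))"
proof -
  have "of_nat (card (UNIV::'a set)) * (of_nat (Delta g) :: complex)
      = (\<Sum>x\<in>D. \<Sum>y\<in>D. \<Sum>b\<in>UNIV. chi b (x - y - g))"
    unfolding Delta_sum sum_distrib_left by (intro sum.cong refl) (simp add: orth_V')
  also have "\<dots> = (\<Sum>x\<in>D. \<Sum>y\<in>D. \<Sum>b\<in>UNIV. chi b x * chi b (- y) * chi b (- g))"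
  proof (intro sum.cong refl)
    fix x y b
    have "x - y - g = x + (- y) + (- g)" by simp
    hence "chi b (x - y - g) = chi b (x + (- y) + (- g))" by (rule arg_cong)
    also have "\<dots> = chi b x * chi b (- y) * chi b (- g)" by (simp only: chi_add)
    finally show "chi b (x - y - g) = chi b x * chi b (- y) * chi b (- g)" .
  qed
  also have "\<dots> = (\<Sum>x\<in>D. \<Sum>b\<in>UNIV. \<Sum>y\<in>D. chi b x * chi b (- y) * chi b (- g))"
    by (rule sum.cong[OF refl], rule sum.swap)
  also have "\<dots> = (\<Sum>b\<in>UNIV. \<Sum>x\<in>D. \<Sum>y\<in>D. chi b x * chi b (- y) * chi b (- g))"
    by (rule sum.swap)
  also have "\<dots> = (\<Sum>b\<in>UNIV. (\<Sum>x\<in>D. chi b x) * (\<Sum>y\<in>D. chi b (- y)) * chi b (- g))"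
    by (rule sum.cong[OF refl]) (simp only: sum_distrib_left sum_distrib_right, rule sum.swap)
  also have "\<dots> = (\<Sum>b\<in>UNIV. Sh b * Sh b * chi b (- g))"
    by (simp only: Sh_neg Sh_def)
  finally show ?thesis .
qed

end

lemma alg_d:
  fixes P m E n d :: real
  assumes P: "P > 0" and n: "n = P * m" and d: "d = ((P - 1) * n^2 + E * n * (1 - P)) / (2 * P)"
  shows "d = (1/2) * (n - m) * (n - E)"
  unfolding d n using P by (simp add: field_simps power2_eq_square)

lemma alg_l:
  fixes P m E n d r s :: real
  assumes P: "P > 0" and m: "m > 0" and E: "E = 1 \<or> E = -1" and n: "n = P * m"
    and d: "d = (1/2) * (n - m) * (n - E)"
    and r: "r = E * n * (1 + P) / (2 * P)" and s: "s = E * n * (1 - P) / (2 * P)"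
  shows "(d^2 - (r + s) * d + r * s) / n^2 = (1/2) * (n - m) * ((1/2) * (n - m) - E)"
    and "(d^2 - (r + s) * d + r * s) / n^2 + (r + s) = (1/4) * (n - m)^2 - (3 * E / 2) * (n - m) + E * n"
  using E
proof -
  have n0: "n \<noteq> 0" using P m n by simp
  have rs1: "r + s = E * m" using P unfolding r s n by (simp add: field_simps)
  have rs2: "r * s = E^2 * m^2 * (1 - P^2) / 4" using P unfolding r s n by (simp add: field_simps power2_eq_square)
  have E2: "E^2 = 1" using E by auto
  have key: "d^2 - (r + s) * d + r * s = n^2 * ((1/2) * (n - m) * ((1/2) * (n - m) - E))"
    unfolding rs1 rs2 d E2 n by (simp add: field_simps power2_eq_square) (use E in \<open>auto simp: algebra_simps\<close>)
  show "(d^2 - (r + s) * d + r * s) / n^2 = (1/2) * (n - m) * ((1/2) * (n - m) - E)"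
    using n0 key by simp
  show "(d^2 - (r + s) * d + r * s) / n^2 + (r + s) = (1/4) * (n - m)^2 - (3 * E / 2) * (n - m) + E * n"
    using n0 key rs1 by (simp add: field_simps power2_eq_square)
qed

context cA
begin

lemma chi_0: "chi 0 x = 1" by simp

lemma Delta_complex: assumes g: "g \<noteq> 0"
  shows "of_nat (card (UNIV::'a set)) * of_nat (Delta g)
       = (of_nat (card D))^2 - complex_of_real (rr + ss) * of_nat (card D) + complex_of_real (rr * ss)
         + (if g \<in> D then complex_of_real (rr + ss) * of_nat (card (UNIV::'a set)) else 0)"
proof -
  define R where "R = complex_of_real (rr + ss)"
  define Q where "Q = complex_of_real (rr * ss)"
  define q where "q = (of_nat (card (UNIV::'a set)) :: complex)"
  define d where "d = (of_nat (card D) :: complex)"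
  have sumchi: "(\<Sum>b\<in>UNIV. chi b (- g)) = 0" using orth_V'[of "-g"] g by simp
  have sumSh: "(\<Sum>b\<in>UNIV. Sh b * chi b (- g)) = (if g \<in> D then q else 0)"
  proof -
    have "(\<Sum>b\<in>UNIV. Sh b * chi b (- g)) = (\<Sum>b\<in>UNIV. \<Sum>x\<in>D. chi b (x + - g))"
      by (simp only: Sh_def sum_distrib_right chi_add)
    also have "\<dots> = (\<Sum>x\<in>D. \<Sum>b\<in>UNIV. chi b (x + - g))" by (rule sum.swap)
    also have "\<dots> = (\<Sum>x\<in>D. if x = g then q else 0)"
      by (rule sum.cong[OF refl]) (simp add: orth_V' q_def)
    also have "\<dots> = (if g \<in> D then q else 0)" by (simp add: sum.delta')
    finally show ?thesis .
  qed
  have A: "(\<Sum>b\<in>UNIV. Sh b * Sh b * chi b (- g)) = d * d + (\<Sum>b\<in>UNIV - {0}. Sh b * Sh b * chi b (- g))"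
    by (subst sum.remove[of _ 0]) (auto simp: Sh_zero d_def)
  have B: "(\<Sum>b\<in>UNIV - {0}. Sh b * Sh b * chi b (- g)) = (\<Sum>b\<in>UNIV - {0}. (R * Sh b - Q) * chi b (- g))"
    by (rule sum.cong[OF refl]) (simp add: Sh_quad R_def Q_def)
  have C: "(\<Sum>b\<in>UNIV. (R * Sh b - Q) * chi b (- g)) = (R * d - Q) + (\<Sum>b\<in>UNIV - {0}. (R * Sh b - Q) * chi b (- g))"
    by (subst sum.remove[of _ 0]) (auto simp: Sh_zero d_def)
  have "(\<Sum>b\<in>UNIV. (R * Sh b - Q) * chi b (- g)) = (\<Sum>b\<in>UNIV. R * (Sh b * chi b (- g)) - Q * chi b (- g))"
    by (rule sum.cong) (simp_all add: algebra_simps)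
  also have "\<dots> = R * (\<Sum>b\<in>UNIV. Sh b * chi b (- g)) - Q * (\<Sum>b\<in>UNIV. chi b (- g))"
    by (simp only: sum_subtractf sum_distrib_left)
  finally have Dd: "(\<Sum>b\<in>UNIV. (R * Sh b - Q) * chi b (- g)) = R * (if g \<in> D then q else 0)"
    using sumSh sumchi by simp
  have E1: "(\<Sum>b\<in>UNIV - {0}. (R * Sh b - Q) * chi b (- g)) = R * (if g \<in> D then q else 0) - (R * d - Q)"
    using C Dd by (metis add_diff_cancel_left')
  have "q * of_nat (Delta g) = d * d + (R * (if g \<in> D then q else 0) - (R * d - Q))"
    unfolding q_def Delta_fourier[of g] A B E1 by (rule refl)
  thus ?thesis by (simp add: R_def Q_def q_def d_def power2_eq_square algebra_simps)
qed

lemma Delta_real: assumes g: "g \<noteq> 0"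
  shows "real (card (UNIV::'a set)) * real (Delta g)
       = (real (card D))^2 - (rr + ss) * real (card D) + rr * ss
         + (if g \<in> D then (rr + ss) * real (card (UNIV::'a set)) else 0)"
proof -
  have "complex_of_real (real (card (UNIV::'a set)) * real (Delta g))
     = complex_of_real ((real (card D))^2 - (rr + ss) * real (card D) + rr * ss
         + (if g \<in> D then (rr + ss) * real (card (UNIV::'a set)) else 0))"
    using Delta_complex[OF g] by simp
  thus ?thesis using of_real_eq_iff by blast
qed

lemma card_D_real: "real (card D) = ((real p - 1) * real (p ^ (2*k)) + real_of_int eps * real (p ^ k) * (1 - real p)) / (2 * real p)"
proof -
  have "complex_of_real (real (card D)) = complex_of_real (((real p - 1) * real (p ^ (2*k)) + real_of_int eps * real (p ^ k) * (1 - real p)) / (2 * real p))"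
    using card_D_c by simp
  thus ?thesis using of_real_eq_iff by blast
qed

lemma pds: "partial_difference_set D
           (real p ^ (2*k))
           ((1/2) * (real p ^ k - real p ^ (k-1)) * (real p ^ k - real_of_int eps))
           ((1/4) * (real p ^ k - real p ^ (k-1))^2
              - (3 * real_of_int eps / 2) * (real p ^ k - real p ^ (k-1))
              + real_of_int eps * real p ^ k)
           ((1/2) * (real p ^ k - real p ^ (k-1))
              * ((1/2) * (real p ^ k - real p ^ (k-1)) - real_of_int eps))"
proof -
  define P where "P = real p"
  define m where "m = real p ^ (k - 1)"
  define n where "n = real p ^ k"
  define E where "E = real_of_int eps"
  have P: "P > 0" using p_gt0 by (simp add: P_def)
  have m: "m > 0" using p_gt0 by (simp add: m_def)
  have E: "E = 1 \<or> E = -1" using eps_pm by (auto simp: E_def)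
  have nPm: "n = P * m" unfolding n_def P_def m_def using k_ge1 by (metis power_Suc Suc_pred' less_le_trans zero_less_one)
  have q: "real (card (UNIV::'a set)) = n^2" using cardU by (simp add: n_def power_mult mult.commute)
  have d0: "real (card D) = ((P - 1) * n^2 + E * n * (1 - P)) / (2 * P)"
    using card_D_real by (simp add: P_def n_def E_def power_mult mult.commute)
  have d: "real (card D) = (1/2) * (n - m) * (n - E)" by (rule alg_d[OF P nPm d0])
  have r: "rr = E * n * (1 + P) / (2 * P)" by (simp add: rr_def E_def n_def P_def)
  have s: "ss = E * n * (1 - P) / (2 * P)" by (simp add: ss_def E_def n_def P_def)
  note L = alg_l[OF P m E nPm d r s]
  have n0: "n^2 \<noteq> 0" using nPm P m by simp
  have Dl: "real (Delta g) = (real (card D)^2 - (rr + ss) * real (card D) + rr * ss) / n^2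
                + (if g \<in> D then rr + ss else 0)" if "g \<noteq> 0" for g
    using Delta_real[OF that] q n0 by (simp add: field_simps split: if_splits)
  show ?thesis
    unfolding partial_difference_set_def
  proof (intro conjI ballI allI impI)
    show "0 \<notin> D" by (simp add: D_def)
    show "real (card (UNIV::'a set)) = real p ^ (2 * k)" using cardU by simp
    show "real (card D) = 1 / 2 * (real p ^ k - real p ^ (k - 1)) * (real p ^ k - real_of_int eps)"
      using d by (simp add: n_def m_def E_def)
  next
    fix g assume "g \<in> D" "g \<noteq> 0"
    thus "real (card {(x, y). x \<in> D \<and> y \<in> D \<and> x - y = g}) = 1 / 4 * (real p ^ k - real p ^ (k - 1))\<^sup>2 -
          3 * real_of_int eps / 2 * (real p ^ k - real p ^ (k - 1)) + real_of_int eps * real p ^ k"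
      using Dl[of g] L(2) d by (simp add: Delta_def n_def m_def E_def)
  next
    fix g assume "g \<notin> D \<and> g \<noteq> 0"
    thus "real (card {(x, y). x \<in> D \<and> y \<in> D \<and> x - y = g}) = 1 / 2 * (real p ^ k - real p ^ (k - 1)) *
          (1 / 2 * (real p ^ k - real p ^ (k - 1)) - real_of_int eps)"
      using Dl[of g] L(1) d by (simp add: Delta_def n_def m_def E_def)
  qed
qed

end

theorem mainTheorem7:
  fixes f :: "'a::{field,finite} \<Rightarrow> 'a" and p k :: nat and \<epsilon> :: int
  assumes "conditionA p k f \<epsilon>"
  shows "partial_difference_set {x. x \<noteq> 0 \<and> is_nonsquare_Fp p (f x)}
           (real p ^ (2*k))
           ((1/2) * (real p ^ k - real p ^ (k-1)) * (real p ^ k - real_of_int \<epsilon>))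
           ((1/4) * (real p ^ k - real p ^ (k-1))^2
              - (3 * real_of_int \<epsilon> / 2) * (real p ^ k - real p ^ (k-1))
              + real_of_int \<epsilon> * real p ^ k)
           ((1/2) * (real p ^ k - real p ^ (k-1))
              * ((1/2) * (real p ^ k - real p ^ (k-1)) - real_of_int \<epsilon>))"
proof -
  interpret cA p k f \<epsilon> by unfold_locales (rule assms)
  show ?thesis using pds by (simp add: D_def)
qed

end
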